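(* Let $d,r,L,K_n,k\in\mathbb{N}$, $\alpha\ge1$, $\beta>0$ and $A,B,C\ge1$. Let $\sigma:\mathbb{R}\to\mathbb{R}$ be $k$-times differentiable such that all derivatives up to order $k$ are bounded on $\mathbb{R}$. Let $\mathcal{F}$ be the set of all networks $f_{\mathbf{w}}$ (defined in the context) whose weight vector satisfies $\sum_{j=1}^{K_n}|w^{(L)}_{1,1,j}|\le C$, $|w^{(l)}_{k',i,j}|\le B$ for $k'\in\{1,\dots,K_n\}$, $i,j\in\{1,\dots,r\}$, $l\in\{1,\dots,L-1\}$, and $|w^{(0)}_{k',i,j}|\le A$ for $k'\in\{1,\dots,K_n\}$, $i\in\{1,\dots,r\}$, $j\in\{1,\dots,d\}$. Then for any $1\le p<\infty$, $0<\epsilon<\beta$ and $x_1,\dots,x_n\in\mathbb{R}^d$, \[ \mathcal{N}_p\big(\epsilon,\{T_\beta f\cdot 1_{[-\alpha,\alpha]^d}: f\in\mathcal{F}\},x_1^n\big)\le\Big(c_{11}\cdot\frac{\beta^p}{\epsilon^p}\Big)^{c_{12}\cdot\alpha^d\cdot B^{(L-1)d}\cdot A^d\cdot (C/\epsilon)^{d/k}+c_{13}}, \] where $c_{11},c_{12},c_{13}>0$ are constants not depending on $n,K_n,\alpha,\beta,A,B,C,\epsilon,x_1,\dots,x_n$.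
   Context: For a weight vector $\mathbf{w}=(w^{(l)}_{k,i,j})$ define $f_{\mathbf{w}}(x)=\sum_{j=1}^{K_n} w^{(L)}_{1,1,j}f^{(L)}_{j,1}(x)$ ($x\in\mathbb{R}^d$), where for $k\in\{1,\dots,K_n\}$, $i\in\{1,\dots,r\}$: $f^{(l)}_{k,i}(x)=\sigma\big(\sum_{j=1}^r w^{(l-1)}_{k,i,j}f^{(l-1)}_{k,j}(x)+w^{(l-1)}_{k,i,0}\big)$ for $l=2,\dots,L$ and $f^{(1)}_{k,i}(x)=\sigma\big(\sum_{j=1}^d w^{(0)}_{k,i,j}x^{(j)}+w^{(0)}_{k,i,0}\big)$. For $z\in\mathbb{R}$, $T_\beta z=\max\{-\beta,\min\{\beta,z\}\}$, and $(T_\beta f)(x)=T_\beta(f(x))$. For a class $\mathcal{G}$ of functions $\mathbb{R}^d\to\mathbb{R}$ and $x_1^n=(x_1,\dots,x_n)$, an $L_p$ $\epsilon$-cover of $\mathcal{G}$ on $x_1^n$ is a finite collection $g_1,\dots,g_N$ such that for every $g\in\mathcal{G}$ there is $i$ with $\big(\frac1n\sum_{k=1}^n|g(x_k)-g_i(x_k)|^p\big)^{1/p}<\epsilon$; $\mathcal{N}_p(\epsilon,\mathcal{G},x_1^n)$ is the minimal size of such a cover. *)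

theory Defs
  imports "HOL-Analysis.Analysis"
begin

text \<open>Points of R^d are represented as functions nat => real, coordinates x 1, ..., x d.
  Weights: w l k i j stands for w^{(l)}_{k,i,j}.\<close>

fun nn_unit :: "(real \<Rightarrow> real) \<Rightarrow> nat \<Rightarrow> nat \<Rightarrow> (nat \<Rightarrow> nat \<Rightarrow> nat \<Rightarrow> nat \<Rightarrow> real)
    \<Rightarrow> nat \<Rightarrow> nat \<Rightarrow> nat \<Rightarrow> (nat \<Rightarrow> real) \<Rightarrow> real" where
  "nn_unit \<sigma> d r w 0 k i x = 0"
| "nn_unit \<sigma> d r w (Suc 0) k i x =
     \<sigma> ((\<Sum>j=1..d. w 0 k i j * x j) + w 0 k i 0)"
| "nn_unit \<sigma> d r w (Suc (Suc l)) k i x =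
     \<sigma> ((\<Sum>j=1..r. w (Suc l) k i j * nn_unit \<sigma> d r w (Suc l) k j x) + w (Suc l) k i 0)"

definition nn_net :: "(real \<Rightarrow> real) \<Rightarrow> nat \<Rightarrow> nat \<Rightarrow> nat \<Rightarrow> nat
    \<Rightarrow> (nat \<Rightarrow> nat \<Rightarrow> nat \<Rightarrow> nat \<Rightarrow> real) \<Rightarrow> (nat \<Rightarrow> real) \<Rightarrow> real" where
  "nn_net \<sigma> d r L K w x = (\<Sum>j=1..K. w L 1 1 j * nn_unit \<sigma> d r w L j 1 x)"

definition trunc_beta :: "real \<Rightarrow> real \<Rightarrow> real" where
  "trunc_beta \<beta> z = max (- \<beta>) (min \<beta> z)"

definition cube_ind :: "real \<Rightarrow> nat \<Rightarrow> (nat \<Rightarrow> real) \<Rightarrow> real" where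
  "cube_ind \<alpha> d x = (if \<forall>j\<in>{1..d}. \<bar>x j\<bar> \<le> \<alpha> then 1 else 0)"

definition smooth_bounded_derivs :: "nat \<Rightarrow> (real \<Rightarrow> real) \<Rightarrow> bool" where
  "smooth_bounded_derivs k \<sigma> \<longleftrightarrow> (\<exists>D :: nat \<Rightarrow> real \<Rightarrow> real.
      D 0 = \<sigma> \<and>
      (\<forall>j<k. \<forall>t. (D j has_real_derivative D (Suc j) t) (at t)) \<and>
      (\<forall>j\<le>k. bounded (range (D j))))"

definition admissible_weights :: "nat \<Rightarrow> nat \<Rightarrow> nat \<Rightarrow> nat \<Rightarrow> real \<Rightarrow> real \<Rightarrow> real
    \<Rightarrow> (nat \<Rightarrow> nat \<Rightarrow> nat \<Rightarrow> nat \<Rightarrow> real) \<Rightarrow> bool" where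
  "admissible_weights d r L K A B C w \<longleftrightarrow>
     (\<Sum>j=1..K. \<bar>w L 1 1 j\<bar>) \<le> C \<and>
     (\<forall>k\<in>{1..K}. \<forall>i\<in>{1..r}. \<forall>j\<in>{1..r}. \<forall>l\<in>{1..L-1}. \<bar>w l k i j\<bar> \<le> B) \<and>
     (\<forall>k\<in>{1..K}. \<forall>i\<in>{1..r}. \<forall>j\<in>{1..d}. \<bar>w 0 k i j\<bar> \<le> A)"

definition net_class :: "(real \<Rightarrow> real) \<Rightarrow> nat \<Rightarrow> nat \<Rightarrow> nat \<Rightarrow> nat \<Rightarrow> real \<Rightarrow> real \<Rightarrow> real
    \<Rightarrow> ((nat \<Rightarrow> real) \<Rightarrow> real) set" where
  "net_class \<sigma> d r L K A B C = {nn_net \<sigma> d r L K w | w. admissible_weights d r L K A B C w}"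

definition is_Lp_cover :: "real \<Rightarrow> real \<Rightarrow> ('a \<Rightarrow> real) set \<Rightarrow> nat \<Rightarrow> (nat \<Rightarrow> 'a)
    \<Rightarrow> nat \<Rightarrow> (nat \<Rightarrow> 'a \<Rightarrow> real) \<Rightarrow> bool" where
  "is_Lp_cover p \<epsilon> G n xs N gs \<longleftrightarrow>
     (\<forall>g\<in>G. \<exists>i<N. ((1 / real n) * (\<Sum>m=1..n. \<bar>g (xs m) - gs i (xs m)\<bar> powr p)) powr (1 / p) < \<epsilon>)"

definition covering_number :: "real \<Rightarrow> real \<Rightarrow> ('a \<Rightarrow> real) set \<Rightarrow> nat \<Rightarrow> (nat \<Rightarrow> 'a) \<Rightarrow> nat" where
  "covering_number p \<epsilon> G n xs = (LEAST N. \<exists>gs. is_Lp_cover p \<epsilon> G n xs N gs)"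

end

theory Submission
  imports Defs "HOL-Computational_Algebra.Polynomial" "HOL-Library.FuncSet"
begin

lemma lagrange_exact:
  fixes p :: "real poly" assumes "degree p \<le> D"
  shows "poly p z = (\<Sum>\<nu>\<le>D. poly p (real \<nu>) * (\<Prod>\<mu>\<in>{..D}-{\<nu>}. (z - real \<mu>)/(real \<nu> - real \<mu>)))"
proof -
  define Lp where "Lp = (\<Sum>\<nu>\<le>D. smult (poly p (real \<nu>)) (\<Prod>\<mu>\<in>{..D}-{\<nu>}. smult (1/(real \<nu> - real \<mu>)) [:- real \<mu>, 1:]))"
  have ev: "poly Lp y = (\<Sum>\<nu>\<le>D. poly p (real \<nu>) * (\<Prod>\<mu>\<in>{..D}-{\<nu>}. (y - real \<mu>)/(real \<nu> - real \<mu>)))" for y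
    unfolding Lp_def by (simp add: poly_sum poly_prod diff_divide_distrib add.commute)
  have dg: "degree Lp \<le> D"
    unfolding Lp_def
  proof (intro degree_sum_le)
    fix \<nu> assume "\<nu> \<in> {..D}"
    have "degree (\<Prod>\<mu>\<in>{..D}-{\<nu>}. smult (1/(real \<nu> - real \<mu>)) [:- real \<mu>, 1:]) \<le> (\<Sum>\<mu>\<in>{..D}-{\<nu>}. 1)"
      by (rule order_trans[OF degree_prod_sum_le]) (auto intro!: sum_mono simp: degree_smult_le)
    also have "\<dots> \<le> D" using \<open>\<nu> \<in> {..D}\<close> by simp
    finally show "degree (smult (poly p (real \<nu>)) (\<Prod>\<mu>\<in>{..D}-{\<nu>}. smult (1/(real \<nu> - real \<mu>)) [:- real \<mu>, 1:])) \<le> D"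
      using degree_smult_le order_trans by blast
  qed simp
  have agree: "poly Lp x = poly p x" if xin: "x \<in> real ` {..D}" for x
  proof -
    obtain n where n0: "n \<in> {..D}" "x = real n" using xin by (rule imageE)
    then have n: "n \<le> D" "x = real n" by auto
    have "poly Lp x = (\<Sum>\<nu>\<in>{..D}. if \<nu> = n then poly p (real n) else 0)"
      unfolding ev n(2)
    proof (rule sum.cong[OF refl])
      fix \<nu> assume \<nu>: "\<nu> \<in> {..D}"
      show "poly p (real \<nu>) * (\<Prod>\<mu>\<in>{..D}-{\<nu>}. (real n - real \<mu>)/(real \<nu> - real \<mu>)) = (if \<nu> = n then poly p (real n) else 0)"
      proof (cases "\<nu> = n")
        case True then show ?thesis by (auto intro!: prod.neutral)
      next
        case False
        have "(\<Prod>\<mu>\<in>{..D}-{\<nu>}. (real n - real \<mu>)/(real \<nu> - real \<mu>)) = 0"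
          by (rule prod_zero) (use False n in auto)
        then show ?thesis using False by simp
      qed
    qed
    also have "\<dots> = poly p x" using n by simp
    finally show ?thesis .
  qed
  have "Lp = p"
    by (rule poly_eqI_degree[of "real ` {..D}"]) (use agree dg assms in \<open>auto simp: card_image inj_on_def\<close>)
  then show ?thesis using ev by metis
qed

lemma lagrange_bound:
  fixes p :: "real poly" assumes "degree p \<le> D" "D \<ge> 1"
    and vals: "\<And>\<nu>. \<nu> \<le> D \<Longrightarrow> \<bar>poly p (real \<nu>)\<bar> \<le> \<delta>"
    and z: "- real D \<le> z" "z \<le> 2 * real D"
  shows "\<bar>poly p z\<bar> \<le> (real D + 1) * (2 * real D) ^ D * \<delta>"
proof -
  have "\<bar>poly p z\<bar> \<le> (\<Sum>\<nu>\<le>D. \<bar>poly p (real \<nu>) * (\<Prod>\<mu>\<in>{..D}-{\<nu>}. (z - real \<mu>)/(real \<nu> - real \<mu>))\<bar>)"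
    unfolding lagrange_exact[OF assms(1), of z] by (rule sum_abs)
  also have "\<dots> \<le> (\<Sum>\<nu>\<le>D. \<delta> * (2 * real D) ^ D)"
  proof (rule sum_mono)
    fix \<nu> assume \<nu>: "\<nu> \<in> {..D}"
    have "\<bar>\<Prod>\<mu>\<in>{..D}-{\<nu>}. (z - real \<mu>)/(real \<nu> - real \<mu>)\<bar> = (\<Prod>\<mu>\<in>{..D}-{\<nu>}. \<bar>(z - real \<mu>)/(real \<nu> - real \<mu>)\<bar>)"
      by (rule abs_prod)
    also have "\<dots> \<le> (2 * real D) ^ D"
    proof (rule prod_le_power)
      fix \<mu> assume \<mu>: "\<mu> \<in> {..D}-{\<nu>}"
      have "\<bar>real \<nu> - real \<mu>\<bar> \<ge> 1" using \<mu> by (auto simp: abs_if)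
      moreover have "\<bar>z - real \<mu>\<bar> \<le> 2 * real D" using \<mu> z by auto
      ultimately have "\<bar>z - real \<mu>\<bar> / \<bar>real \<nu> - real \<mu>\<bar> \<le> 2 * real D"
      proof -
        have "\<bar>z - real \<mu>\<bar> / \<bar>real \<nu> - real \<mu>\<bar> \<le> \<bar>z - real \<mu>\<bar> / 1"
          by (rule divide_left_mono) (use \<open>\<bar>real \<nu> - real \<mu>\<bar> \<ge> 1\<close> in auto)
        then show ?thesis using \<open>\<bar>z - real \<mu>\<bar> \<le> 2 * real D\<close> by simp
      qed
      then show "0 \<le> \<bar>(z - real \<mu>)/(real \<nu> - real \<mu>)\<bar> \<and> \<bar>(z - real \<mu>)/(real \<nu> - real \<mu>)\<bar> \<le> 2 * real D"
        by simp
    qed (use \<nu> \<open>D \<ge> 1\<close> in auto)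
    finally have "\<bar>\<Prod>\<mu>\<in>{..D}-{\<nu>}. (z - real \<mu>)/(real \<nu> - real \<mu>)\<bar> \<le> (2 * real D) ^ D" .
    then show "\<bar>poly p (real \<nu>) * (\<Prod>\<mu>\<in>{..D}-{\<nu>}. (z - real \<mu>)/(real \<nu> - real \<mu>))\<bar> \<le> \<delta> * (2 * real D) ^ D"
      unfolding abs_mult using vals[of \<nu>] \<nu> by (intro mult_mono) auto
  qed
  also have "\<dots> = (real D + 1) * (2 * real D) ^ D * \<delta>" by simp
  finally show ?thesis .
qed

definition sep_poly :: "nat \<Rightarrow> nat \<Rightarrow> ((nat \<Rightarrow> real) \<Rightarrow> real) \<Rightarrow> bool" where
  "sep_poly d D P \<longleftrightarrow> (\<forall>x y. (\<forall>j\<in>{1..d}. x j = y j) \<longrightarrow> P x = P y) \<and>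
     (\<forall>x. \<forall>i\<in>{1..d}. \<exists>q. degree q \<le> D \<and> (\<forall>t. P (x(i:=t)) = poly q t))"

lemma sep_polyD1: "sep_poly d D P \<Longrightarrow> (\<And>j. j \<in> {1..d} \<Longrightarrow> x j = y j) \<Longrightarrow> P x = P y"
  unfolding sep_poly_def by blast

lemma sep_polyD2: "sep_poly d D P \<Longrightarrow> i \<in> {1..d} \<Longrightarrow> \<exists>q. degree q \<le> D \<and> (\<forall>t. P (x(i:=t)) = poly q t)"
  unfolding sep_poly_def by blast

lemma sep_poly_mono: "sep_poly d D P \<Longrightarrow> D \<le> D' \<Longrightarrow> sep_poly d D' P"
  unfolding sep_poly_def by (meson order_trans)

lemma sep_poly_const: "sep_poly d D (\<lambda>x. c)"
  unfolding sep_poly_def by (auto intro!: exI[of _ "[:c:]"])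

lemma sep_poly_add:
  assumes "sep_poly d D P" "sep_poly d D Q" shows "sep_poly d D (\<lambda>x. P x + Q x)"
  unfolding sep_poly_def
proof (intro conjI allI impI ballI)
  fix x y :: "nat \<Rightarrow> real" assume "\<forall>j\<in>{1..d}. x j = y j"
  then show "P x + Q x = P y + Q y" using sep_polyD1[OF assms(1)] sep_polyD1[OF assms(2)] by metis
next
  fix x :: "nat \<Rightarrow> real" and i assume i: "i \<in> {1..d}"
  obtain q1 where q1: "degree q1 \<le> D" "\<forall>t. P (x(i:=t)) = poly q1 t" using sep_polyD2[OF assms(1) i] by blast
  obtain q2 where q2: "degree q2 \<le> D" "\<forall>t. Q (x(i:=t)) = poly q2 t" using sep_polyD2[OF assms(2) i] by blast
  show "\<exists>q. degree q \<le> D \<and> (\<forall>t. P (x(i:=t)) + Q (x(i:=t)) = poly q t)"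
    by (rule exI[of _ "q1 + q2"]) (use q1 q2 degree_add_le in auto)
qed

lemma sep_poly_cmult:
  assumes "sep_poly d D P" shows "sep_poly d D (\<lambda>x. c * P x)"
  unfolding sep_poly_def
proof (intro conjI allI impI ballI)
  fix x y :: "nat \<Rightarrow> real" assume "\<forall>j\<in>{1..d}. x j = y j"
  then show "c * P x = c * P y" using sep_polyD1[OF assms(1)] by metis
next
  fix x :: "nat \<Rightarrow> real" and i assume i: "i \<in> {1..d}"
  obtain q1 where q1: "degree q1 \<le> D" "\<forall>t. P (x(i:=t)) = poly q1 t" using sep_polyD2[OF assms(1) i] by blast
  show "\<exists>q. degree q \<le> D \<and> (\<forall>t. c * P (x(i:=t)) = poly q t)"
    by (rule exI[of _ "smult c q1"]) (use q1 degree_smult_le order_trans in auto)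
qed

lemma sep_poly_sum:
  assumes "finite S" "\<And>j. j \<in> S \<Longrightarrow> sep_poly d D (P j)"
  shows "sep_poly d D (\<lambda>x. \<Sum>j\<in>S. P j x)"
  using assms
proof (induction S rule: finite_induct)
  case empty then show ?case using sep_poly_const[of d D 0] by simp
next
  case (insert a F)
  then show ?case using sep_poly_add[of d D "P a" "\<lambda>x. \<Sum>j\<in>F. P j x"] by simp
qed

lemma sep_poly_comp:
  assumes "sep_poly d D P" "degree r \<le> e" shows "sep_poly d (e * D) (\<lambda>x. poly r (P x))"
  unfolding sep_poly_def
proof (intro conjI allI impI ballI)
  fix x y :: "nat \<Rightarrow> real" assume "\<forall>j\<in>{1..d}. x j = y j"
  then show "poly r (P x) = poly r (P y)" using sep_polyD1[OF assms(1)] by metis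
next
  fix x :: "nat \<Rightarrow> real" and i assume i: "i \<in> {1..d}"
  obtain q1 where q1: "degree q1 \<le> D" "\<forall>t. P (x(i:=t)) = poly q1 t" using sep_polyD2[OF assms(1) i] by blast
  have "degree (pcompose r q1) \<le> e * D"
    using degree_pcompose_le[of r q1] mult_le_mono[OF assms(2) q1(1)] by linarith
  then show "\<exists>q. degree q \<le> e * D \<and> (\<forall>t. poly r (P (x(i:=t))) = poly q t)"
    by (intro exI[of _ "pcompose r q1"]) (simp add: q1 poly_pcompose)
qed

lemma sep_poly_coord:
  assumes "j \<in> {1..d}" shows "sep_poly d 1 (\<lambda>x. x j)"
  unfolding sep_poly_def
proof (intro conjI allI impI ballI)
  fix x y :: "nat \<Rightarrow> real" assume "\<forall>j\<in>{1..d}. x j = y j"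
  then show "x j = y j" using assms by blast
next
  fix x :: "nat \<Rightarrow> real" and i assume i: "i \<in> {1..d}"
  show "\<exists>q. degree q \<le> 1 \<and> (\<forall>t. (x(i:=t)) j = poly q t)"
  proof (cases "i = j")
    case True then show ?thesis by (intro exI[of _ "[:0,1:]"]) auto
  next
    case False then show ?thesis by (intro exI[of _ "[:x j:]"]) auto
  qed
qed

lemma sep_poly_affine:
  "sep_poly d 1 (\<lambda>x. (\<Sum>j=1..d. a j * x j) + b)"
  by (intro sep_poly_add sep_poly_const sep_poly_sum sep_poly_cmult sep_poly_coord) auto

definition Lam :: "nat \<Rightarrow> real" where "Lam D = (real D + 1) * (2 * real D) ^ D"

lemma Lam_ge1: "D \<ge> 1 \<Longrightarrow> Lam D \<ge> 1"
proof -
  assume "D \<ge> 1"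
  then have "(2 * real D) ^ D \<ge> 1" by (intro one_le_power) auto
  moreover have "real D + 1 \<ge> 1" by simp
  ultimately show ?thesis unfolding Lam_def using mult_mono[of 1 "real D + 1" 1 "(2 * real D) ^ D"] by simp
qed

lemma oned_bound:
  fixes q :: "real poly"
  assumes "degree q \<le> D" "D \<ge> 1" "\<rho> > 0"
    and vals: "\<And>t. t \<le> D \<Longrightarrow> \<bar>poly q (c - \<rho> + (2 * \<rho> / real D) * real t)\<bar> \<le> \<delta>"
    and s: "\<bar>s - c\<bar> \<le> 3 * \<rho>"
  shows "\<bar>poly q s\<bar> \<le> Lam D * \<delta>"
proof -
  define p where "p = pcompose q [:c - \<rho>, 2 * \<rho> / real D:]"
  have pp: "poly p z = poly q (c - \<rho> + (2 * \<rho> / real D) * z)" for z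
    unfolding p_def by (simp add: poly_pcompose algebra_simps)
  have dp: "degree p \<le> D"
    unfolding p_def
  proof -
    have "degree [:c - \<rho>, 2 * \<rho> / real D:] \<le> 1" by simp
    then have *: "degree q * degree [:c - \<rho>, 2 * \<rho> / real D:] \<le> D * 1"
      using assms(1) by (intro mult_le_mono) auto
    show "degree (pcompose q [:c - \<rho>, 2 * \<rho> / real D:]) \<le> D"
      by (rule order_trans[OF degree_pcompose_le]) (use * in \<open>simp only: mult_1_right\<close>)
  qed
  define z where "z = (s - (c - \<rho>)) * real D / (2 * \<rho>)"
  have zs: "c - \<rho> + (2 * \<rho> / real D) * z = s" unfolding z_def using assms(2,3) by (simp add: field_simps)
  have "- real D \<le> z" "z \<le> 2 * real D"
  proof -
    have a1: "(s - c + 3 * \<rho>) * real D \<ge> 0" "(3 * \<rho> - (s - c)) * real D \<ge> 0"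
      using s by (auto simp: abs_le_iff)
    have "- real D \<le> z \<longleftrightarrow> - real D * (2 * \<rho>) \<le> (s - (c - \<rho>)) * real D"
      unfolding z_def using assms(3) by (simp add: pos_le_divide_eq)
    moreover have "z \<le> 2 * real D \<longleftrightarrow> (s - (c - \<rho>)) * real D \<le> 2 * real D * (2 * \<rho>)"
      unfolding z_def using assms(3) by (simp add: pos_divide_le_eq)
    ultimately show "- real D \<le> z" "z \<le> 2 * real D" using a1 by (auto simp: algebra_simps)
  qed
  then have "\<bar>poly p z\<bar> \<le> (real D + 1) * (2 * real D) ^ D * \<delta>"
    by (intro lagrange_bound[OF dp assms(2)]) (use vals pp in auto)
  then show ?thesis using pp[of z] zs unfolding Lam_def by simp
qed

lemma box_bound:
  assumes P: "sep_poly d D P" and D: "D \<ge> 1" and rho: "\<rho> > 0"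
    and hyp: "\<And>y. (\<forall>i\<in>{1..d}. \<exists>t\<le>D. y i = c i - \<rho> + (2 * \<rho> / real D) * real t) \<Longrightarrow> \<bar>P y\<bar> \<le> \<delta>"
    and x: "\<forall>i\<in>{1..d}. \<bar>x i - c i\<bar> \<le> 3 * \<rho>"
  shows "\<bar>P x\<bar> \<le> Lam D ^ d * \<delta>"
proof -
  have main: "\<forall>y. (\<forall>i\<in>{1..j}. \<bar>y i - c i\<bar> \<le> 3 * \<rho>) \<and>
      (\<forall>i\<in>{j<..d}. \<exists>t\<le>D. y i = c i - \<rho> + (2 * \<rho> / real D) * real t) \<longrightarrow> \<bar>P y\<bar> \<le> Lam D ^ j * \<delta>"
    if "j \<le> d" for j
    using that
  proof (induction j)
    case 0
    then show ?case using hyp by auto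
  next
    case (Suc j)
    show ?case
    proof (intro allI impI)
      fix y assume yy: "(\<forall>i\<in>{1..Suc j}. \<bar>y i - c i\<bar> \<le> 3 * \<rho>) \<and>
          (\<forall>i\<in>{Suc j<..d}. \<exists>t\<le>D. y i = c i - \<rho> + (2 * \<rho> / real D) * real t)"
      have sj: "Suc j \<in> {1..d}" using Suc.prems by auto
      obtain q where q: "degree q \<le> D" "\<forall>t. P (y(Suc j:=t)) = poly q t"
        using sep_polyD2[OF P sj] by blast
      have "\<bar>poly q (y (Suc j))\<bar> \<le> Lam D * (Lam D ^ j * \<delta>)"
      proof (rule oned_bound[OF q(1) D rho])
        fix t assume t: "t \<le> D"
        define y' where "y' = y(Suc j := c (Suc j) - \<rho> + (2 * \<rho> / real D) * real t)"
        have "\<bar>P y'\<bar> \<le> Lam D ^ j * \<delta>"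
        proof -
          have c1: "\<forall>i\<in>{1..j}. \<bar>y' i - c i\<bar> \<le> 3 * \<rho>" using yy unfolding y'_def by auto
          have c2: "\<forall>i\<in>{j<..d}. \<exists>t\<le>D. y' i = c i - \<rho> + (2 * \<rho> / real D) * real t"
          proof
            fix i assume i: "i \<in> {j<..d}"
            show "\<exists>t\<le>D. y' i = c i - \<rho> + (2 * \<rho> / real D) * real t"
            proof (cases "i = Suc j")
              case True then show ?thesis using t unfolding y'_def by auto
            next
              case False then have "i \<in> {Suc j<..d}" using i by auto
              then show ?thesis using yy False unfolding y'_def by auto
            qed
          qed
          show ?thesis using Suc.IH Suc.prems c1 c2 by auto
        qed
        then show "\<bar>poly q (c (Suc j) - \<rho> + (2 * \<rho> / real D) * real t)\<bar> \<le> Lam D ^ j * \<delta>"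
          using q(2) unfolding y'_def by metis
      next
        show "\<bar>y (Suc j) - c (Suc j)\<bar> \<le> 3 * \<rho>" using yy by auto
      qed
      moreover have "P y = poly q (y (Suc j))" using q(2)[rule_format, of "y (Suc j)"] by simp
      ultimately show "\<bar>P y\<bar> \<le> Lam D ^ Suc j * \<delta>" by (simp add: mult.assoc)
    qed
  qed
  show ?thesis using main[of d] x by auto
qed

definition tay :: "(nat \<Rightarrow> real \<Rightarrow> real) \<Rightarrow> nat \<Rightarrow> real \<Rightarrow> real poly" where
  "tay Dd k u = (\<Sum>m<k. smult (Dd m u / fact m) ([:- u, 1:] ^ m))"

lemma poly_tay: "poly (tay Dd k u) v = (\<Sum>m<k. Dd m u / fact m * (v - u) ^ m)"
  unfolding tay_def by (simp add: poly_sum)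

lemma degree_tay: "degree (tay Dd k u) \<le> k - 1"
  unfolding tay_def
proof (rule degree_sum_le)
  fix m assume "m \<in> {..<k}"
  then have "degree ([:- u, 1:] ^ m) \<le> k - 1"
    using degree_power_le[of "[:- u, 1:]" m] by auto
  then show "degree (smult (Dd m u / fact m) ([:- u, 1:] ^ m)) \<le> k - 1"
    using degree_smult_le order_trans by blast
qed simp

locale sigctx =
  fixes \<sigma> :: "real \<Rightarrow> real" and Dd :: "nat \<Rightarrow> real \<Rightarrow> real" and k :: nat and M :: real
  assumes k1: "k \<ge> 1" and M1: "M \<ge> 1" and D0: "Dd 0 = \<sigma>"
    and Dder: "\<And>j t. j < k \<Longrightarrow> (Dd j has_real_derivative Dd (Suc j) t) (at t)"
    and Mb: "\<And>j t. j \<le> k \<Longrightarrow> \<bar>Dd j t\<bar> \<le> M"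
begin

lemma taylor_gen:
  assumes n: "1 \<le> n" "n \<le> k"
  shows "\<bar>\<sigma> v - (\<Sum>m<n. Dd m u / fact m * (v - u) ^ m)\<bar> \<le> M * \<bar>v - u\<bar> ^ n"
proof (cases "v = u")
  case True
  have "(\<Sum>m<n. Dd m u / fact m * (v - u) ^ m) = (\<Sum>m\<in>{0}. Dd m u / fact m * (v - u) ^ m)"
    by (rule sum.mono_neutral_right) (use n True in auto)
  then show ?thesis using True D0 n M1 by (simp add: zero_power)
next
  case False
  obtain t where t: "\<sigma> v = (\<Sum>m<n. (Dd m u / fact m) * (v - u)^m) + (Dd n t / fact n) * (v - u)^n"
    using Taylor[of n Dd \<sigma> "min u v" "max u v" u v] n False D0 Dder by fastforce
  have "\<bar>(Dd n t / fact n) * (v - u)^n\<bar> = \<bar>Dd n t\<bar> / fact n * \<bar>v - u\<bar>^n"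
    by (simp add: abs_mult power_abs)
  also have "\<dots> \<le> M / 1 * \<bar>v - u\<bar>^n"
    using Mb[of n t] n by (intro mult_right_mono frac_le) (auto simp: fact_ge_1)
  finally show ?thesis using t by simp
qed

lemma taylor_err: "\<bar>\<sigma> v - poly (tay Dd k u) v\<bar> \<le> M * \<bar>v - u\<bar> ^ k"
  using taylor_gen[of k v u] k1 unfolding poly_tay by simp

lemma sig_lip: "\<bar>\<sigma> v - \<sigma> u\<bar> \<le> M * \<bar>v - u\<bar>"
proof -
  have "\<bar>\<sigma> v - (\<Sum>m<1. Dd m u / fact m * (v - u) ^ m)\<bar> \<le> M * \<bar>v - u\<bar> ^ 1"
    using taylor_gen[of 1 v u] k1 by simp
  then show ?thesis using D0 by simp
qed

lemma sig_bound: "\<bar>\<sigma> t\<bar> \<le> M"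
  using Mb[of 0 t] D0 by simp

end

lemma sum_weighted_bound:
  fixes c g :: "nat \<Rightarrow> real"
  assumes "\<And>j. j \<in> S \<Longrightarrow> \<bar>c j\<bar> \<le> B" "\<And>j. j \<in> S \<Longrightarrow> \<bar>g j\<bar> \<le> e"
  shows "\<bar>\<Sum>j\<in>S. c j * g j\<bar> \<le> real (card S) * (B * e)"
proof -
  have "\<bar>\<Sum>j\<in>S. c j * g j\<bar> \<le> (\<Sum>j\<in>S. \<bar>c j * g j\<bar>)" by (rule sum_abs)
  also have "\<dots> \<le> real (card S) * (B * e)"
  proof (rule sum_bounded_above)
    fix j assume j: "j \<in> S"
    show "\<bar>c j * g j\<bar> \<le> B * e" unfolding abs_mult
      using assms[OF j] by (intro mult_mono) auto
  qed
  finally show ?thesis .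
qed

fun Lc :: "real \<Rightarrow> nat \<Rightarrow> nat \<Rightarrow> nat \<Rightarrow> real" where
  "Lc M d r 0 = 0"
| "Lc M d r (Suc 0) = M * real d"
| "Lc M d r (Suc (Suc l)) = M * real r * Lc M d r (Suc l)"

fun Ec :: "real \<Rightarrow> nat \<Rightarrow> nat \<Rightarrow> nat \<Rightarrow> nat \<Rightarrow> real" where
  "Ec M d r k 0 = 0"
| "Ec M d r k (Suc 0) = M * real d ^ k"
| "Ec M d r k (Suc (Suc l)) = M * real r * Ec M d r k (Suc l) + M * (real r * (Ec M d r k (Suc l) + Lc M d r (Suc l))) ^ k"

lemma Lc_nonneg: "M \<ge> 0 \<Longrightarrow> Lc M d r l \<ge> 0"
  by (induction M d r l rule: Lc.induct) auto

lemma Ec_nonneg: "M \<ge> 0 \<Longrightarrow> Ec M d r k l \<ge> 0"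
  by (induction M d r k l rule: Ec.induct) (auto intro!: add_nonneg_nonneg mult_nonneg_nonneg zero_le_power Lc_nonneg)

context sigctx
begin

lemma unit_approx:
  assumes adm: "admissible_weights d r L K A B C w" and B1: "B \<ge> 1" and rho: "\<rho> > 0" and A0: "A \<ge> 0"
  shows "1 \<le> l \<Longrightarrow> l \<le> L \<Longrightarrow> A * B^(l-1) * \<rho> \<le> 1 \<Longrightarrow>
    \<forall>kk\<in>{1..K}. \<forall>i\<in>{1..r}.
    (\<forall>x. (\<forall>j\<in>{1..d}. \<bar>x j - x0 j\<bar> \<le> \<rho>) \<longrightarrow>
        \<bar>nn_unit \<sigma> d r w l kk i x - nn_unit \<sigma> d r w l kk i x0\<bar> \<le> Lc M d r l * (A * B^(l-1) * \<rho>)) \<and>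
    (\<exists>P. sep_poly d (k^l) P \<and> (\<forall>x. (\<forall>j\<in>{1..d}. \<bar>x j - x0 j\<bar> \<le> \<rho>) \<longrightarrow>
        \<bar>nn_unit \<sigma> d r w l kk i x - P x\<bar> \<le> Ec M d r k l * (A * B^(l-1) * \<rho>) ^ k))"
proof (induction l)
  case 0 then show ?case by simp
next
  case (Suc l)
  show ?case
  proof (cases l)
    case 0
    have "\<forall>kk\<in>{1..K}. \<forall>i\<in>{1..r}.
    (\<forall>x. (\<forall>j\<in>{1..d}. \<bar>x j - x0 j\<bar> \<le> \<rho>) \<longrightarrow>
        \<bar>nn_unit \<sigma> d r w (Suc 0) kk i x - nn_unit \<sigma> d r w (Suc 0) kk i x0\<bar> \<le> Lc M d r (Suc 0) * (A * B^(Suc 0-1) * \<rho>)) \<and>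
    (\<exists>P. sep_poly d (k^Suc 0) P \<and> (\<forall>x. (\<forall>j\<in>{1..d}. \<bar>x j - x0 j\<bar> \<le> \<rho>) \<longrightarrow>
        \<bar>nn_unit \<sigma> d r w (Suc 0) kk i x - P x\<bar> \<le> Ec M d r k (Suc 0) * (A * B^(Suc 0-1) * \<rho>) ^ k))"
    proof (intro ballI)
      fix kk i assume kk: "kk \<in> {1..K}" and i: "i \<in> {1..r}"
      define u where "u x = (\<Sum>j=1..d. w 0 kk i j * x j) + w 0 kk i 0" for x :: "nat \<Rightarrow> real"
      have wA: "\<And>j. j \<in> {1..d} \<Longrightarrow> \<bar>w 0 kk i j\<bar> \<le> A" using adm kk i unfolding admissible_weights_def by blast
      have ub: "\<bar>u x - u x0\<bar> \<le> real d * (A * \<rho>)" if x: "\<forall>j\<in>{1..d}. \<bar>x j - x0 j\<bar> \<le> \<rho>" for x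
      proof -
        have "u x - u x0 = (\<Sum>j=1..d. w 0 kk i j * (x j - x0 j))"
          unfolding u_def by (simp add: sum_subtractf[symmetric] algebra_simps)
        also have "\<bar>\<dots>\<bar> \<le> real (card {1..d}) * (A * \<rho>)"
          by (rule sum_weighted_bound) (use wA x in auto)
        finally show ?thesis by simp
      qed
      have nu: "nn_unit \<sigma> d r w (Suc 0) kk i x = \<sigma> (u x)" for x unfolding u_def by simp
      have part1: "\<forall>x. (\<forall>j\<in>{1..d}. \<bar>x j - x0 j\<bar> \<le> \<rho>) \<longrightarrow>
        \<bar>nn_unit \<sigma> d r w (Suc 0) kk i x - nn_unit \<sigma> d r w (Suc 0) kk i x0\<bar> \<le> Lc M d r (Suc 0) * (A * B^(Suc 0-1) * \<rho>)"
      proof (intro allI impI)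
        fix x assume x: "\<forall>j\<in>{1..d}. \<bar>x j - x0 j\<bar> \<le> \<rho>"
        have "\<bar>\<sigma> (u x) - \<sigma> (u x0)\<bar> \<le> M * \<bar>u x - u x0\<bar>" by (rule sig_lip)
        also have "\<dots> \<le> M * (real d * (A * \<rho>))" using ub[OF x] M1 by (intro mult_left_mono) auto
        finally show "\<bar>nn_unit \<sigma> d r w (Suc 0) kk i x - nn_unit \<sigma> d r w (Suc 0) kk i x0\<bar> \<le> Lc M d r (Suc 0) * (A * B^(Suc 0-1) * \<rho>)"
          unfolding nu by (simp add: algebra_simps)
      qed
      define P where "P x = poly (tay Dd k (u x0)) (u x)" for x
      have sp: "sep_poly d ((k-1) * 1) P"
        unfolding P_def u_def by (rule sep_poly_comp[OF sep_poly_affine degree_tay])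
      have sp': "sep_poly d (k^Suc 0) P" by (rule sep_poly_mono[OF sp]) auto
      have part2: "\<forall>x. (\<forall>j\<in>{1..d}. \<bar>x j - x0 j\<bar> \<le> \<rho>) \<longrightarrow>
        \<bar>nn_unit \<sigma> d r w (Suc 0) kk i x - P x\<bar> \<le> Ec M d r k (Suc 0) * (A * B^(Suc 0-1) * \<rho>) ^ k"
      proof (intro allI impI)
        fix x assume x: "\<forall>j\<in>{1..d}. \<bar>x j - x0 j\<bar> \<le> \<rho>"
        have "\<bar>\<sigma> (u x) - P x\<bar> \<le> M * \<bar>u x - u x0\<bar> ^ k" unfolding P_def by (rule taylor_err)
        also have "\<dots> \<le> M * (real d * (A * \<rho>)) ^ k" using ub[OF x] M1 by (intro mult_left_mono power_mono) auto
        finally show "\<bar>nn_unit \<sigma> d r w (Suc 0) kk i x - P x\<bar> \<le> Ec M d r k (Suc 0) * (A * B^(Suc 0-1) * \<rho>) ^ k"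
          unfolding nu by (simp add: algebra_simps power_mult_distrib)
      qed
      show "(\<forall>x. (\<forall>j\<in>{1..d}. \<bar>x j - x0 j\<bar> \<le> \<rho>) \<longrightarrow>
        \<bar>nn_unit \<sigma> d r w (Suc 0) kk i x - nn_unit \<sigma> d r w (Suc 0) kk i x0\<bar> \<le> Lc M d r (Suc 0) * (A * B^(Suc 0-1) * \<rho>)) \<and>
        (\<exists>P. sep_poly d (k^Suc 0) P \<and> (\<forall>x. (\<forall>j\<in>{1..d}. \<bar>x j - x0 j\<bar> \<le> \<rho>) \<longrightarrow>
        \<bar>nn_unit \<sigma> d r w (Suc 0) kk i x - P x\<bar> \<le> Ec M d r k (Suc 0) * (A * B^(Suc 0-1) * \<rho>) ^ k))"
        using part1 part2 sp' by blast
    qed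
    then show ?thesis using 0 by simp
  next
    case (Suc l')
    note lS = Suc
    have l1: "1 \<le> l" "l \<le> L" "Suc l \<le> L" using lS Suc.prems by auto
    define \<theta> where "\<theta> = A * B^(l-1) * \<rho>"
    define \<theta>' where "\<theta>' = A * B^(Suc l-1) * \<rho>"
    have th': "\<theta>' = B * \<theta>" unfolding \<theta>_def \<theta>'_def using lS by simp
    have th0: "\<theta> \<ge> 0" unfolding \<theta>_def using A0 B1 rho by simp
    have th'1: "\<theta>' \<le> 1" using Suc.prems unfolding \<theta>'_def by simp
    have thle: "\<theta> \<le> \<theta>'" unfolding th' using th0 B1 by (simp add: mult_le_cancel_right1)
    have th1: "\<theta> \<le> 1" using thle th'1 by simp
    have th'0: "\<theta>' \<ge> 0" using thle th0 by simp
    have Bk: "B * \<theta>^k \<le> \<theta>'^k"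
    proof -
      have "B ^ 1 \<le> B ^ k" using B1 k1 by (intro power_increasing) auto
      then have "B * \<theta>^k \<le> B^k * \<theta>^k" using th0 by (intro mult_right_mono) auto
      then show ?thesis unfolding th' by (simp add: power_mult_distrib)
    qed
    have thk: "\<theta>'^k \<le> \<theta>'" using power_decreasing[of 1 k \<theta>'] k1 th'0 th'1 by simp
    have IH: "\<forall>kk\<in>{1..K}. \<forall>i\<in>{1..r}.
      (\<forall>x. (\<forall>j\<in>{1..d}. \<bar>x j - x0 j\<bar> \<le> \<rho>) \<longrightarrow>
        \<bar>nn_unit \<sigma> d r w l kk i x - nn_unit \<sigma> d r w l kk i x0\<bar> \<le> Lc M d r l * \<theta>) \<and>
      (\<exists>P. sep_poly d (k^l) P \<and> (\<forall>x. (\<forall>j\<in>{1..d}. \<bar>x j - x0 j\<bar> \<le> \<rho>) \<longrightarrow>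
        \<bar>nn_unit \<sigma> d r w l kk i x - P x\<bar> \<le> Ec M d r k l * \<theta> ^ k))"
      unfolding \<theta>_def by (rule Suc.IH) (use l1 th1 \<theta>_def in auto)
    have Lc0: "Lc M d r l \<ge> 0" and Ec0: "Ec M d r k l \<ge> 0" using M1 Lc_nonneg Ec_nonneg by auto
    have "\<forall>kk\<in>{1..K}. \<forall>i\<in>{1..r}.
      (\<forall>x. (\<forall>j\<in>{1..d}. \<bar>x j - x0 j\<bar> \<le> \<rho>) \<longrightarrow>
        \<bar>nn_unit \<sigma> d r w (Suc l) kk i x - nn_unit \<sigma> d r w (Suc l) kk i x0\<bar> \<le> Lc M d r (Suc l) * \<theta>') \<and>
      (\<exists>P. sep_poly d (k^Suc l) P \<and> (\<forall>x. (\<forall>j\<in>{1..d}. \<bar>x j - x0 j\<bar> \<le> \<rho>) \<longrightarrow>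
        \<bar>nn_unit \<sigma> d r w (Suc l) kk i x - P x\<bar> \<le> Ec M d r k (Suc l) * \<theta>' ^ k))"
    proof (intro ballI)
      fix kk i assume kk: "kk \<in> {1..K}" and i: "i \<in> {1..r}"
      define c where "c j = w l kk i j" for j
      define h where "h j x = nn_unit \<sigma> d r w l kk j x" for j x
      have cB: "\<And>j. j \<in> {1..r} \<Longrightarrow> \<bar>c j\<bar> \<le> B"
        using adm kk i l1 unfolding admissible_weights_def c_def by auto
      have ha: "\<And>j x. j \<in> {1..r} \<Longrightarrow> (\<forall>j\<in>{1..d}. \<bar>x j - x0 j\<bar> \<le> \<rho>) \<Longrightarrow> \<bar>h j x - h j x0\<bar> \<le> Lc M d r l * \<theta>"
        using IH kk unfolding h_def by blast
      have "\<forall>j\<in>{1..r}. \<exists>P. sep_poly d (k^l) P \<and> (\<forall>x. (\<forall>j\<in>{1..d}. \<bar>x j - x0 j\<bar> \<le> \<rho>) \<longrightarrow>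
        \<bar>h j x - P x\<bar> \<le> Ec M d r k l * \<theta> ^ k)"
        using IH kk unfolding h_def by blast
      then obtain Pj where Pj: "\<And>j. j \<in> {1..r} \<Longrightarrow> sep_poly d (k^l) (Pj j)"
        "\<And>j x. j \<in> {1..r} \<Longrightarrow> (\<forall>j\<in>{1..d}. \<bar>x j - x0 j\<bar> \<le> \<rho>) \<Longrightarrow> \<bar>h j x - Pj j x\<bar> \<le> Ec M d r k l * \<theta> ^ k"
        by metis
      define v where "v x = (\<Sum>j=1..r. c j * h j x) + w l kk i 0" for x
      define vt where "vt x = (\<Sum>j=1..r. c j * Pj j x) + w l kk i 0" for x
      have nu: "nn_unit \<sigma> d r w (Suc l) kk i x = \<sigma> (v x)" for x
        unfolding v_def c_def h_def lS by simp
      have va: "\<bar>v x - v x0\<bar> \<le> real r * Lc M d r l * \<theta>'" if x: "\<forall>j\<in>{1..d}. \<bar>x j - x0 j\<bar> \<le> \<rho>" for x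
      proof -
        have "v x - v x0 = (\<Sum>j=1..r. c j * (h j x - h j x0))"
          unfolding v_def by (simp add: sum_subtractf[symmetric] algebra_simps)
        also have "\<bar>\<dots>\<bar> \<le> real (card {1..r}) * (B * (Lc M d r l * \<theta>))"
          by (rule sum_weighted_bound) (use cB ha x in auto)
        finally show ?thesis unfolding th' by (simp add: algebra_simps)
      qed
      have vb: "\<bar>v x - vt x\<bar> \<le> real r * Ec M d r k l * \<theta>'^k" if x: "\<forall>j\<in>{1..d}. \<bar>x j - x0 j\<bar> \<le> \<rho>" for x
      proof -
        have "v x - vt x = (\<Sum>j=1..r. c j * (h j x - Pj j x))"
          unfolding v_def vt_def by (simp add: sum_subtractf[symmetric] algebra_simps)
        also have "\<bar>\<dots>\<bar> \<le> real (card {1..r}) * (B * (Ec M d r k l * \<theta>^k))"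
          by (rule sum_weighted_bound) (use cB Pj(2) x in auto)
        also have "\<dots> = real r * Ec M d r k l * (B * \<theta>^k)" by simp
        also have "\<dots> \<le> real r * Ec M d r k l * \<theta>'^k"
          using Bk Ec0 by (intro mult_left_mono) auto
        finally show ?thesis .
      qed
      have part1: "\<forall>x. (\<forall>j\<in>{1..d}. \<bar>x j - x0 j\<bar> \<le> \<rho>) \<longrightarrow>
        \<bar>nn_unit \<sigma> d r w (Suc l) kk i x - nn_unit \<sigma> d r w (Suc l) kk i x0\<bar> \<le> Lc M d r (Suc l) * \<theta>'"
      proof (intro allI impI)
        fix x assume x: "\<forall>j\<in>{1..d}. \<bar>x j - x0 j\<bar> \<le> \<rho>"
        have "\<bar>\<sigma> (v x) - \<sigma> (v x0)\<bar> \<le> M * \<bar>v x - v x0\<bar>" by (rule sig_lip)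
        also have "\<dots> \<le> M * (real r * Lc M d r l * \<theta>')" using va[OF x] M1 by (intro mult_left_mono) auto
        finally show "\<bar>nn_unit \<sigma> d r w (Suc l) kk i x - nn_unit \<sigma> d r w (Suc l) kk i x0\<bar> \<le> Lc M d r (Suc l) * \<theta>'"
          unfolding nu using lS by (simp add: algebra_simps)
      qed
      define P where "P x = poly (tay Dd k (v x0)) (vt x)" for x
      have svt: "sep_poly d (k^l) vt"
        unfolding vt_def by (intro sep_poly_add sep_poly_const sep_poly_sum sep_poly_cmult Pj(1)) auto
      have sp: "sep_poly d ((k-1) * k^l) P"
        unfolding P_def by (rule sep_poly_comp[OF svt degree_tay])
      have sp': "sep_poly d (k^Suc l) P" by (rule sep_poly_mono[OF sp]) auto
      have part2: "\<forall>x. (\<forall>j\<in>{1..d}. \<bar>x j - x0 j\<bar> \<le> \<rho>) \<longrightarrow>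
        \<bar>nn_unit \<sigma> d r w (Suc l) kk i x - P x\<bar> \<le> Ec M d r k (Suc l) * \<theta>' ^ k"
      proof (intro allI impI)
        fix x assume x: "\<forall>j\<in>{1..d}. \<bar>x j - x0 j\<bar> \<le> \<rho>"
        have e1: "\<bar>\<sigma> (v x) - \<sigma> (vt x)\<bar> \<le> M * (real r * Ec M d r k l * \<theta>'^k)"
          using sig_lip[of "v x" "vt x"] vb[OF x] M1
          by (smt (verit, ccfv_SIG) abs_minus_commute mult_left_mono)
        have vtv: "\<bar>vt x - v x0\<bar> \<le> real r * (Ec M d r k l + Lc M d r l) * \<theta>'"
        proof -
          have "\<bar>vt x - v x0\<bar> \<le> \<bar>v x - vt x\<bar> + \<bar>v x - v x0\<bar>" by simp
          also have "\<dots> \<le> real r * Ec M d r k l * \<theta>'^k + real r * Lc M d r l * \<theta>'"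
            using vb[OF x] va[OF x] by simp
          also have "\<dots> \<le> real r * Ec M d r k l * \<theta>' + real r * Lc M d r l * \<theta>'"
            using thk Ec0 by (simp add: mult_left_mono)
          finally show ?thesis by (simp add: algebra_simps)
        qed
        have e2: "\<bar>\<sigma> (vt x) - P x\<bar> \<le> M * (real r * (Ec M d r k l + Lc M d r l) * \<theta>') ^ k"
        proof -
          have "\<bar>\<sigma> (vt x) - P x\<bar> \<le> M * \<bar>vt x - v x0\<bar> ^ k" unfolding P_def by (rule taylor_err)
          also have "\<dots> \<le> M * (real r * (Ec M d r k l + Lc M d r l) * \<theta>') ^ k"
            using vtv M1 by (intro mult_left_mono power_mono) auto
          finally show ?thesis .
        qed
        have "\<bar>\<sigma> (v x) - P x\<bar> \<le> M * (real r * Ec M d r k l * \<theta>'^k) + M * (real r * (Ec M d r k l + Lc M d r l) * \<theta>') ^ k"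
          using e1 e2 by simp
        also have "\<dots> = Ec M d r k (Suc l) * \<theta>' ^ k"
        proof -
          have pw: "(real r * (Ec M d r k l + Lc M d r l) * \<theta>') ^ k = (real r * (Ec M d r k l + Lc M d r l)) ^ k * \<theta>' ^ k"
            by (rule power_mult_distrib)
          show ?thesis unfolding pw by (simp only: lS Ec.simps distrib_right mult.assoc)
        qed
        finally show "\<bar>nn_unit \<sigma> d r w (Suc l) kk i x - P x\<bar> \<le> Ec M d r k (Suc l) * \<theta>' ^ k"
          unfolding nu .
      qed
      show "(\<forall>x. (\<forall>j\<in>{1..d}. \<bar>x j - x0 j\<bar> \<le> \<rho>) \<longrightarrow>
        \<bar>nn_unit \<sigma> d r w (Suc l) kk i x - nn_unit \<sigma> d r w (Suc l) kk i x0\<bar> \<le> Lc M d r (Suc l) * \<theta>') \<and>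
      (\<exists>P. sep_poly d (k^Suc l) P \<and> (\<forall>x. (\<forall>j\<in>{1..d}. \<bar>x j - x0 j\<bar> \<le> \<rho>) \<longrightarrow>
        \<bar>nn_unit \<sigma> d r w (Suc l) kk i x - P x\<bar> \<le> Ec M d r k (Suc l) * \<theta>' ^ k))"
        using part1 part2 sp' by blast
    qed
    then show ?thesis unfolding \<theta>'_def .
  qed
qed

end

locale covctx =
  fixes d D :: nat and \<alpha> \<rho> \<eta> E Fb :: real and F :: "((nat \<Rightarrow> real) \<Rightarrow> real) set"
  assumes d1: "d \<ge> 1" and D1: "D \<ge> 1" and alpha0: "\<alpha> > 0" and rho0: "\<rho> > 0" and eta0: "\<eta> > 0"
    and E0: "E \<ge> 0"
    and approx: "\<And>f c. f \<in> F \<Longrightarrow> \<exists>P. sep_poly d D P \<and>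
                   (\<forall>x. (\<forall>j\<in>{1..d}. \<bar>x j - c j\<bar> \<le> 3 * \<rho>) \<longrightarrow> \<bar>f x - P x\<bar> \<le> E)"
    and fb: "\<And>f x. f \<in> F \<Longrightarrow> \<bar>f x\<bar> \<le> Fb"
begin

definition "Nn = nat \<lceil>\<alpha> / \<rho>\<rceil>"
definition bx :: "(nat \<Rightarrow> real) \<Rightarrow> real \<Rightarrow> (nat \<Rightarrow> real) set" where "bx c s = {x. \<forall>j\<in>{1..d}. \<bar>x j - c j\<bar> \<le> s}"
definition Tn :: "(nat \<Rightarrow> nat) set" where "Tn = {1..d} \<rightarrow>\<^sub>E {..D}"
definition Idx :: "(nat \<Rightarrow> nat) set" where "Idx = {1..d} \<rightarrow>\<^sub>E {..<Nn}"
definition node :: "(nat \<Rightarrow> real) \<Rightarrow> (nat \<Rightarrow> nat) \<Rightarrow> nat \<Rightarrow> real" where "node c t = (\<lambda>j. c j - \<rho> + (2 * \<rho> / real D) * real (t j))"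
definition cen :: "(nat \<Rightarrow> nat) \<Rightarrow> nat \<Rightarrow> real" where "cen \<nu> = (\<lambda>j. - \<alpha> + (2 * real (\<nu> j) + 1) * \<rho>)"
definition rt :: "nat \<Rightarrow> nat" where "rt = (\<lambda>j\<in>{1..d}. 0::nat)"
definition jz :: "(nat \<Rightarrow> nat) \<Rightarrow> nat" where "jz \<nu> = (LEAST j. j \<in> {1..d} \<and> \<nu> j > (0::nat))"
definition "par \<nu> = \<nu>(jz \<nu> := \<nu> (jz \<nu>) - 1)"
definition "Pf f \<nu> = (SOME P. sep_poly d D P \<and> (\<forall>x\<in>bx (cen \<nu>) (3 * \<rho>). \<bar>f x - P x\<bar> \<le> E))"
definition "code f = (\<lambda>\<nu>\<in>Idx. \<lambda>t\<in>Tn. round (Pf f \<nu> (node (cen \<nu>) t) / \<eta>))"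
definition "Qd \<nu> m = (SOME Q. sep_poly d D Q \<and> (\<forall>t\<in>Tn. \<bar>Q (node (cen \<nu>) t) - \<eta> * of_int (m t)\<bar> \<le> \<eta> / 2))"
definition ix :: "(nat \<Rightarrow> real) \<Rightarrow> nat \<Rightarrow> nat" where "ix x = (\<lambda>j\<in>{1..d}. min (Nn - 1) (nat \<lfloor>(x j + \<alpha>) / (2 * \<rho>)\<rfloor>))"
definition "gfun cd x = Qd (ix x) (cd (ix x)) x"
definition "enc cd = (\<lambda>t\<in>Tn. cd rt t,
   \<lambda>\<nu>\<in>Idx. \<lambda>t\<in>Tn. if \<nu> = rt then 0 else cd \<nu> t - round (Qd (par \<nu>) (cd (par \<nu>)) (node (cen \<nu>) t) / \<eta>))"

lemma Pf_spec: assumes "f \<in> F"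
  shows "sep_poly d D (Pf f \<nu>) \<and> (\<forall>x\<in>bx (cen \<nu>) (3 * \<rho>). \<bar>f x - Pf f \<nu> x\<bar> \<le> E)"
proof -
  obtain P where "sep_poly d D P" "\<forall>x. (\<forall>j\<in>{1..d}. \<bar>x j - cen \<nu> j\<bar> \<le> 3 * \<rho>) \<longrightarrow> \<bar>f x - P x\<bar> \<le> E"
    using approx[OF assms, of "cen \<nu>"] by blast
  then have "\<exists>P. sep_poly d D P \<and> (\<forall>x\<in>bx (cen \<nu>) (3 * \<rho>). \<bar>f x - P x\<bar> \<le> E)"
    unfolding bx_def by blast
  then show ?thesis unfolding Pf_def by (rule someI_ex)
qed

lemma grid_point:
  assumes "\<forall>i\<in>{1..d}. \<exists>t\<le>D. y i = c i - \<rho> + (2 * \<rho> / real D) * real t"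
  shows "\<exists>t\<in>Tn. \<forall>i\<in>{1..d}. y i = node c t i"
proof -
  obtain tf where tf: "\<And>i. i \<in> {1..d} \<Longrightarrow> tf i \<le> D \<and> y i = c i - \<rho> + (2 * \<rho> / real D) * real (tf i)"
    using assms by metis
  show ?thesis
    by (rule bexI[of _ "restrict tf {1..d}"]) (use tf in \<open>auto simp: Tn_def node_def\<close>)
qed

lemma poly_close:
  assumes "sep_poly d D Q" "sep_poly d D P" "\<And>t. t \<in> Tn \<Longrightarrow> \<bar>Q (node c t) - P (node c t)\<bar> \<le> \<delta>"
    and x: "x \<in> bx c (3 * \<rho>)"
  shows "\<bar>Q x - P x\<bar> \<le> Lam D ^ d * \<delta>"
proof -
  have sp: "sep_poly d D (\<lambda>x. Q x + (-1) * P x)"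
    by (intro sep_poly_add sep_poly_cmult assms(1,2))
  have "\<bar>Q x + (-1) * P x\<bar> \<le> Lam D ^ d * \<delta>"
  proof (rule box_bound[OF sp D1 rho0])
    fix y assume y: "\<forall>i\<in>{1..d}. \<exists>t\<le>D. y i = c i - \<rho> + (2 * \<rho> / real D) * real t"
    obtain t where t: "t \<in> Tn" "\<forall>i\<in>{1..d}. y i = node c t i" using grid_point[OF y] by blast
    have "Q y = Q (node c t)" by (rule sep_polyD1[OF assms(1)]) (use t(2) in blast)
    moreover have "P y = P (node c t)" by (rule sep_polyD1[OF assms(2)]) (use t(2) in blast)
    ultimately show "\<bar>Q y + (-1) * P y\<bar> \<le> \<delta>" using assms(3)[OF t(1)] by simp
  next
    show "\<forall>i\<in>{1..d}. \<bar>x i - c i\<bar> \<le> 3 * \<rho>" using x unfolding bx_def by auto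
  qed
  then show ?thesis by simp
qed

lemma Qd_spec:
  assumes "sep_poly d D P" "\<And>t. t \<in> Tn \<Longrightarrow> \<bar>P (node (cen \<nu>) t) - \<eta> * of_int (m t)\<bar> \<le> \<eta> / 2"
  shows "sep_poly d D (Qd \<nu> m) \<and> (\<forall>t\<in>Tn. \<bar>Qd \<nu> m (node (cen \<nu>) t) - \<eta> * of_int (m t)\<bar> \<le> \<eta> / 2)"
proof -
  have "\<exists>Q. sep_poly d D Q \<and> (\<forall>t\<in>Tn. \<bar>Q (node (cen \<nu>) t) - \<eta> * of_int (m t)\<bar> \<le> \<eta> / 2)"
    using assms by blast
  then show ?thesis unfolding Qd_def by (rule someI_ex)
qed

lemma round_eta: "\<bar>p - \<eta> * of_int (round (p / \<eta>))\<bar> \<le> \<eta> / 2"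
proof -
  have "\<bar>of_int (round (p / \<eta>)) - p / \<eta>\<bar> \<le> 1/2" by (rule of_int_round_abs_le)
  then have "\<eta> * \<bar>of_int (round (p / \<eta>)) - p / \<eta>\<bar> \<le> \<eta> * (1/2)" using eta0 by (intro mult_left_mono) auto
  moreover have "\<eta> * \<bar>of_int (round (p / \<eta>)) - p / \<eta>\<bar> = \<bar>p - \<eta> * of_int (round (p / \<eta>))\<bar>"
  proof -
    have "\<eta> * \<bar>of_int (round (p / \<eta>)) - p / \<eta>\<bar> = \<bar>\<eta> * (of_int (round (p / \<eta>)) - p / \<eta>)\<bar>"
      using eta0 by (simp add: abs_mult)
    also have "\<eta> * (of_int (round (p / \<eta>)) - p / \<eta>) = \<eta> * of_int (round (p / \<eta>)) - p"
      using eta0 by (simp add: right_diff_distrib)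
    finally show ?thesis by (simp add: abs_minus_commute)
  qed
  ultimately show ?thesis by simp
qed

lemma Q_close:
  assumes f: "f \<in> F" and nu: "\<nu> \<in> Idx" and x: "x \<in> bx (cen \<nu>) (3 * \<rho>)"
  shows "\<bar>Qd \<nu> (code f \<nu>) x - Pf f \<nu> x\<bar> \<le> Lam D ^ d * \<eta>"
proof -
  have cf: "code f \<nu> t = round (Pf f \<nu> (node (cen \<nu>) t) / \<eta>)" if "t \<in> Tn" for t
    using nu that unfolding code_def by simp
  have q: "sep_poly d D (Qd \<nu> (code f \<nu>)) \<and> (\<forall>t\<in>Tn. \<bar>Qd \<nu> (code f \<nu>) (node (cen \<nu>) t) - \<eta> * of_int (code f \<nu> t)\<bar> \<le> \<eta> / 2)"
    by (rule Qd_spec[OF conjunct1[OF Pf_spec[OF f, of \<nu>]]]) (simp only: cf round_eta)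
  show ?thesis
  proof (rule poly_close[OF conjunct1[OF q] conjunct1[OF Pf_spec[OF f, of \<nu>]] _ x])
    fix t assume t: "t \<in> Tn"
    have "\<bar>Pf f \<nu> (node (cen \<nu>) t) - \<eta> * of_int (code f \<nu> t)\<bar> \<le> \<eta> / 2"
      using cf[OF t] round_eta by simp
    then show "\<bar>Qd \<nu> (code f \<nu>) (node (cen \<nu>) t) - Pf f \<nu> (node (cen \<nu>) t)\<bar> \<le> \<eta>"
    proof -
      have "\<bar>Qd \<nu> (code f \<nu>) (node (cen \<nu>) t) - \<eta> * of_int (code f \<nu> t)\<bar> \<le> \<eta> / 2"
        using q t by blast
      then show ?thesis using \<open>\<bar>Pf f \<nu> (node (cen \<nu>) t) - \<eta> * of_int (code f \<nu> t)\<bar> \<le> \<eta> / 2\<close> by linarith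
    qed
  qed
qed

lemma Nn1: "Nn \<ge> 1"
proof -
  have "\<alpha> / \<rho> > 0" using alpha0 rho0 by simp
  then show ?thesis unfolding Nn_def by linarith
qed

lemma Nn_ge: "real Nn \<ge> \<alpha> / \<rho>"
  unfolding Nn_def by linarith

lemma ix_props:
  assumes x: "\<forall>j\<in>{1..d}. \<bar>x j\<bar> \<le> \<alpha>"
  shows "ix x \<in> Idx" "x \<in> bx (cen (ix x)) \<rho>"
proof -
  show "ix x \<in> Idx" unfolding ix_def Idx_def using Nn1 by auto
  show "x \<in> bx (cen (ix x)) \<rho>"
    unfolding bx_def mem_Collect_eq
  proof
    fix j assume j: "j \<in> {1..d}"
    define z where "z = (x j + \<alpha>) / (2 * \<rho>)"
    have "\<bar>x j\<bar> \<le> \<alpha>" using x j by blast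
    then have "x j + \<alpha> \<ge> 0" by linarith
    then have z0: "z \<ge> 0" unfolding z_def using rho0 by simp
    have zN: "z \<le> real Nn"
    proof -
      have "x j + \<alpha> \<le> 2 * \<alpha>" using \<open>\<bar>x j\<bar> \<le> \<alpha>\<close> by linarith
      then have "z \<le> (2 * \<alpha>) / (2 * \<rho>)" unfolding z_def using rho0 by (intro divide_right_mono) auto
      also have "\<dots> = \<alpha> / \<rho>" by simp
      finally show ?thesis using Nn_ge by simp
    qed
    define q where "q = nat \<lfloor>z\<rfloor>"
    have q1: "real q \<le> z" "z < real q + 1" unfolding q_def using z0 by linarith+
    have ixj: "ix x j = min (Nn - 1) q" unfolding ix_def q_def z_def using j by simp
    have bnd: "real (ix x j) \<le> z \<and> z \<le> real (ix x j) + 1"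
    proof (cases "q \<le> Nn - 1")
      case True then show ?thesis using ixj q1 by simp
    next
      case False
      then have "ix x j = Nn - 1" using ixj by simp
      moreover have "real (Nn - 1) < real q" using False by simp
      ultimately show ?thesis using q1 zN Nn1 by (simp add: of_nat_diff)
    qed
    have "x j - cen (ix x) j = 2 * \<rho> * (z - real (ix x j)) - \<rho>"
      unfolding cen_def z_def using rho0 by (simp add: field_simps)
    moreover have "0 \<le> 2 * \<rho> * (z - real (ix x j))" "2 * \<rho> * (z - real (ix x j)) \<le> 2 * \<rho>"
    proof -
      have "0 \<le> z - real (ix x j)" "z - real (ix x j) \<le> 1" using bnd by linarith+
      then show "0 \<le> 2 * \<rho> * (z - real (ix x j))" "2 * \<rho> * (z - real (ix x j)) \<le> 2 * \<rho>"
        using rho0 mult_left_mono[of "z - real (ix x j)" 1 "2 * \<rho>"] by auto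
    qed
    ultimately show "\<bar>x j - cen (ix x) j\<bar> \<le> \<rho>" by linarith
  qed
qed

lemma node_in_bx: assumes "t \<in> Tn" shows "node c t \<in> bx c \<rho>"
  unfolding bx_def mem_Collect_eq
proof
  fix j assume j: "j \<in> {1..d}"
  have tj: "real (t j) \<le> real D" using assms j unfolding Tn_def by auto
  have "(2 * \<rho> / real D) * real (t j) \<le> (2 * \<rho> / real D) * real D"
    using tj rho0 by (intro mult_left_mono) auto
  also have "\<dots> = 2 * \<rho>" using D1 by simp
  finally have "(2 * \<rho> / real D) * real (t j) \<le> 2 * \<rho>" .
  moreover have "(2 * \<rho> / real D) * real (t j) \<ge> 0" using rho0 by simp
  moreover have "node c t j - c j = (2 * \<rho> / real D) * real (t j) - \<rho>" unfolding node_def by simp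
  ultimately show "\<bar>node c t j - c j\<bar> \<le> \<rho>" by linarith
qed

lemma bx_mono: "x \<in> bx c s \<Longrightarrow> s \<le> s' \<Longrightarrow> x \<in> bx c s'"
  unfolding bx_def mem_Collect_eq by (meson order_trans)

lemma bx_shift: "x \<in> bx c \<rho> \<Longrightarrow> (\<And>j. j \<in> {1..d} \<Longrightarrow> \<bar>c j - c' j\<bar> \<le> 2 * \<rho>) \<Longrightarrow> x \<in> bx c' (3 * \<rho>)"
proof -
  assume a: "x \<in> bx c \<rho>" and b: "\<And>j. j \<in> {1..d} \<Longrightarrow> \<bar>c j - c' j\<bar> \<le> 2 * \<rho>"
  have "\<bar>x j - c' j\<bar> \<le> 3 * \<rho>" if j: "j \<in> {1..d}" for j
  proof -
    have "\<bar>x j - c' j\<bar> \<le> \<bar>x j - c j\<bar> + \<bar>c j - c' j\<bar>" by simp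
    then show ?thesis using a b[OF j] j unfolding bx_def by fastforce
  qed
  then show ?thesis unfolding bx_def by blast
qed

lemma approx_g:
  assumes f: "f \<in> F" and x: "\<forall>j\<in>{1..d}. \<bar>x j\<bar> \<le> \<alpha>"
  shows "\<bar>f x - gfun (code f) x\<bar> \<le> E + Lam D ^ d * \<eta>"
proof -
  define \<nu> where "\<nu> = ix x"
  have nu: "\<nu> \<in> Idx" "x \<in> bx (cen \<nu>) (3 * \<rho>)"
    using ix_props[OF x] bx_mono[of x _ \<rho> "3 * \<rho>"] rho0 unfolding \<nu>_def by auto
  have "\<bar>f x - Pf f \<nu> x\<bar> \<le> E" using Pf_spec[OF f, of \<nu>] nu by blast
  moreover have "\<bar>Qd \<nu> (code f \<nu>) x - Pf f \<nu> x\<bar> \<le> Lam D ^ d * \<eta>" by (rule Q_close[OF f nu])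
  ultimately show ?thesis unfolding gfun_def \<nu>_def[symmetric] by linarith
qed

end

context covctx
begin

lemma rt_Idx: "rt \<in> Idx"
  unfolding rt_def Idx_def PiE_iff using Nn1 by auto

lemma nonroot_ex: assumes "\<nu> \<in> Idx" "\<nu> \<noteq> rt" shows "\<exists>j\<in>{1..d}. \<nu> j > 0"
proof (rule ccontr)
  assume "\<not> (\<exists>j\<in>{1..d}. \<nu> j > 0)"
  then have z: "\<And>j. j \<in> {1..d} \<Longrightarrow> \<nu> j = 0" by (metis neq0_conv)
  have "\<nu> = rt"
  proof (rule ext)
    fix j show "\<nu> j = rt j"
    proof (cases "j \<in> {1..d}")
      case True then show ?thesis using z unfolding rt_def by simp
    next
      case False then show ?thesis using PiE_arb[OF assms(1)[unfolded Idx_def] False] by (auto simp: rt_def)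
    qed
  qed
  then show False using assms(2) by simp
qed

lemma jz_props: assumes "\<nu> \<in> Idx" "\<nu> \<noteq> rt" shows "jz \<nu> \<in> {1..d}" "\<nu> (jz \<nu>) > 0"
proof -
  have "\<exists>j. j \<in> {1..d} \<and> \<nu> j > 0" using nonroot_ex[OF assms] by blast
  then have "jz \<nu> \<in> {1..d} \<and> \<nu> (jz \<nu>) > 0" unfolding jz_def by (rule LeastI_ex)
  then show "jz \<nu> \<in> {1..d}" "\<nu> (jz \<nu>) > 0" by auto
qed

lemma par_Idx: assumes "\<nu> \<in> Idx" "\<nu> \<noteq> rt" shows "par \<nu> \<in> Idx"
proof -
  note j = jz_props[OF assms]
  have a: "\<And>i. i \<in> {1..d} \<Longrightarrow> \<nu> i < Nn" using assms(1) unfolding Idx_def by auto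
  have b: "\<And>i. i \<notin> {1..d} \<Longrightarrow> \<nu> i = undefined" using PiE_arb[OF assms(1)[unfolded Idx_def]] by blast
  have c: "par \<nu> i < Nn" if i: "i \<in> {1..d}" for i
  proof (cases "i = jz \<nu>")
    case True then show ?thesis using a[OF i] by (simp add: par_def)
  next
    case False then show ?thesis using a[OF i] by (simp add: par_def)
  qed
  have e: "par \<nu> i = undefined" if i: "i \<notin> {1..d}" for i
  proof -
    have "i \<noteq> jz \<nu>" using i j(1) by blast
    then show ?thesis using b[OF i] by (simp add: par_def)
  qed
  show ?thesis unfolding Idx_def PiE_iff extensional_def using c e by blast
qed

lemma par_sum: assumes "\<nu> \<in> Idx" "\<nu> \<noteq> rt" shows "sum (par \<nu>) {1..d} < sum \<nu> {1..d}"
proof -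
  note j = jz_props[OF assms]
  have "sum (par \<nu>) {1..d} = par \<nu> (jz \<nu>) + sum (par \<nu>) ({1..d} - {jz \<nu>})"
    by (rule sum.remove) (use j in auto)
  also have "sum (par \<nu>) ({1..d} - {jz \<nu>}) = sum \<nu> ({1..d} - {jz \<nu>})"
    by (rule sum.cong) (auto simp: par_def)
  also have "par \<nu> (jz \<nu>) < \<nu> (jz \<nu>)" using j by (simp add: par_def)
  also have "\<nu> (jz \<nu>) + sum \<nu> ({1..d} - {jz \<nu>}) = sum \<nu> {1..d}"
    by (rule sum.remove[symmetric]) (use j in auto)
  finally show ?thesis by simp
qed

lemma par_cen: assumes "\<nu> \<in> Idx" "\<nu> \<noteq> rt" shows "\<bar>cen \<nu> j - cen (par \<nu>) j\<bar> \<le> 2 * \<rho>"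
proof (cases "j = jz \<nu>")
  case True
  have "\<nu> j > 0" using jz_props[OF assms] True by simp
  then have "real (par \<nu> j) = real (\<nu> j) - 1" using True by (simp add: par_def of_nat_diff)
  moreover have "cen \<nu> j - cen (par \<nu>) j = 2 * \<rho> * (real (\<nu> j) - real (par \<nu> j))"
    unfolding cen_def by (simp add: algebra_simps)
  ultimately have "cen \<nu> j - cen (par \<nu>) j = 2 * \<rho>" by simp
  then show ?thesis using rho0 by simp
next
  case False then show ?thesis using rho0 by (simp add: par_def cen_def)
qed

definition "R0 = nat \<lceil>(Fb + E) / \<eta> + 1\<rceil>"
definition "R = nat \<lceil>1 + Lam D ^ d + 2 * E / \<eta>\<rceil>"
definition "Tgt = (Tn \<rightarrow>\<^sub>E {- int R0..int R0}) \<times> (Idx \<rightarrow>\<^sub>E (Tn \<rightarrow>\<^sub>E {- int R..int R}))"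

lemma int_abs_le_of_real: fixes i :: int assumes "\<bar>real_of_int i\<bar> \<le> b" shows "\<bar>i\<bar> \<le> int (nat \<lceil>b\<rceil>)"
proof -
  have "real_of_int \<bar>i\<bar> \<le> b" using assms by simp
  then have "\<bar>i\<bar> \<le> \<lceil>b\<rceil>" by (simp add: le_ceiling_iff)
  then show ?thesis by linarith
qed

lemma code_rt_bound: assumes f: "f \<in> F" and t: "t \<in> Tn" shows "\<bar>code f rt t\<bar> \<le> int R0"
proof -
  define y where "y = node (cen rt) t"
  have y: "y \<in> bx (cen rt) (3 * \<rho>)" unfolding y_def by (rule bx_mono[OF node_in_bx[OF t]]) (use rho0 in simp)
  have "\<bar>f y - Pf f rt y\<bar> \<le> E" using Pf_spec[OF f, of rt] y by blast
  then have Py: "\<bar>Pf f rt y\<bar> \<le> Fb + E" using fb[OF f, of y] by linarith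
  have cf: "code f rt t = round (Pf f rt y / \<eta>)" unfolding code_def y_def using rt_Idx t by simp
  have "\<bar>real_of_int (round (Pf f rt y / \<eta>)) - Pf f rt y / \<eta>\<bar> \<le> 1/2" by (rule of_int_round_abs_le)
  moreover have "\<bar>Pf f rt y / \<eta>\<bar> \<le> (Fb + E) / \<eta>" using Py eta0 by (simp add: divide_right_mono)
  ultimately have "\<bar>real_of_int (round (Pf f rt y / \<eta>))\<bar> \<le> (Fb + E) / \<eta> + 1" by linarith
  then show ?thesis unfolding cf R0_def by (rule int_abs_le_of_real)
qed

lemma round_diff: "\<bar>real_of_int (round a - round b)\<bar> \<le> \<bar>a - b\<bar> + 1"
proof -
  have h: "\<bar>real_of_int (round a) - a\<bar> \<le> 1/2" "\<bar>real_of_int (round b) - b\<bar> \<le> 1/2"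
    by (rule of_int_round_abs_le)+
  have "\<bar>real_of_int (round a - round b)\<bar> = \<bar>(real_of_int (round a) - a) + (a - b) - (real_of_int (round b) - b)\<bar>"
    by simp
  also have "\<dots> \<le> \<bar>real_of_int (round a) - a\<bar> + \<bar>a - b\<bar> + \<bar>real_of_int (round b) - b\<bar>"
    by (rule order_trans[OF abs_triangle_ineq4]) (simp add: abs_triangle_ineq order_trans[OF abs_triangle_ineq])
  finally show ?thesis using h by linarith
qed

lemma code_diff_bound:
  assumes f: "f \<in> F" and nu: "\<nu> \<in> Idx" "\<nu> \<noteq> rt" and t: "t \<in> Tn"
  shows "\<bar>code f \<nu> t - round (Qd (par \<nu>) (code f (par \<nu>)) (node (cen \<nu>) t) / \<eta>)\<bar> \<le> int R"
proof -
  define y where "y = node (cen \<nu>) t"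
  define p where "p = par \<nu>"
  have p: "p \<in> Idx" unfolding p_def by (rule par_Idx[OF nu])
  have y1: "y \<in> bx (cen \<nu>) \<rho>" unfolding y_def by (rule node_in_bx[OF t])
  have y3: "y \<in> bx (cen \<nu>) (3 * \<rho>)" by (rule bx_mono[OF y1]) (use rho0 in simp)
  have y3p: "y \<in> bx (cen p) (3 * \<rho>)" unfolding p_def by (rule bx_shift[OF y1 par_cen[OF nu]])
  have e1: "\<bar>f y - Pf f \<nu> y\<bar> \<le> E" using Pf_spec[OF f, of \<nu>] y3 by blast
  have e2: "\<bar>f y - Pf f p y\<bar> \<le> E" using Pf_spec[OF f, of p] y3p by blast
  have e3: "\<bar>Qd p (code f p) y - Pf f p y\<bar> \<le> Lam D ^ d * \<eta>" by (rule Q_close[OF f p y3p])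
  have cf: "code f \<nu> t = round (Pf f \<nu> y / \<eta>)" unfolding code_def y_def using nu t by simp
  have "\<bar>Pf f \<nu> y - Qd p (code f p) y\<bar> \<le> 2 * E + Lam D ^ d * \<eta>" using e1 e2 e3 by linarith
  then have "\<bar>Pf f \<nu> y / \<eta> - Qd p (code f p) y / \<eta>\<bar> \<le> (2 * E + Lam D ^ d * \<eta>) / \<eta>"
    using eta0 by (simp add: diff_divide_distrib[symmetric] divide_right_mono)
  also have "\<dots> = 2 * E / \<eta> + Lam D ^ d" using eta0 by (simp add: field_simps)
  finally have "\<bar>real_of_int (round (Pf f \<nu> y / \<eta>) - round (Qd p (code f p) y / \<eta>))\<bar> \<le> 1 + Lam D ^ d + 2 * E / \<eta>"
    using round_diff[of "Pf f \<nu> y / \<eta>" "Qd p (code f p) y / \<eta>"] by linarith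
  then show ?thesis unfolding cf R_def p_def y_def by (rule int_abs_le_of_real[unfolded p_def y_def])
qed

end

context covctx
begin

lemma in_int_interval: fixes i :: int shows "\<bar>i\<bar> \<le> int n \<Longrightarrow> i \<in> {- int n..int n}"
  by auto

lemma enc_in: assumes f: "f \<in> F" shows "enc (code f) \<in> Tgt"
proof -
  have a: "(\<lambda>t\<in>Tn. code f rt t) \<in> Tn \<rightarrow>\<^sub>E {- int R0..int R0}"
    using code_rt_bound[OF f] in_int_interval by (simp add: restrict_PiE_iff)
  have b: "(\<lambda>\<nu>\<in>Idx. \<lambda>t\<in>Tn. if \<nu> = rt then 0 else code f \<nu> t - round (Qd (par \<nu>) (code f (par \<nu>)) (node (cen \<nu>) t) / \<eta>))
      \<in> Idx \<rightarrow>\<^sub>E (Tn \<rightarrow>\<^sub>E {- int R..int R})"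
    unfolding restrict_PiE_iff
  proof (intro ballI)
    fix \<nu> t assume nu: "\<nu> \<in> Idx" and t: "t \<in> Tn"
    show "(if \<nu> = rt then 0 else code f \<nu> t - round (Qd (par \<nu>) (code f (par \<nu>)) (node (cen \<nu>) t) / \<eta>))
          \<in> {- int R..int R}"
    proof (cases "\<nu> = rt")
      case True then show ?thesis by simp
    next
      case False then show ?thesis using code_diff_bound[OF f nu False t] in_int_interval by simp
    qed
  qed
  show ?thesis unfolding enc_def Tgt_def using a b by simp
qed

lemma code_undef1: "\<nu> \<notin> Idx \<Longrightarrow> code f \<nu> = undefined"
  unfolding code_def by simp

lemma code_undef2: "\<nu> \<in> Idx \<Longrightarrow> t \<notin> Tn \<Longrightarrow> code f \<nu> t = undefined"
  unfolding code_def by simp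

lemma enc_inj: "inj_on enc (code ` F)"
proof (rule inj_onI)
  fix c1 c2 assume c1: "c1 \<in> code ` F" and c2: "c2 \<in> code ` F" and eq: "enc c1 = enc c2"
  obtain f1 where f1: "f1 \<in> F" "c1 = code f1" using c1 by blast
  obtain f2 where f2: "f2 \<in> F" "c2 = code f2" using c2 by blast
  have fstEq: "c1 rt t = c2 rt t" if t: "t \<in> Tn" for t
  proof -
    have "(\<lambda>t\<in>Tn. c1 rt t) t = (\<lambda>t\<in>Tn. c2 rt t) t" using eq unfolding enc_def by simp
    then show ?thesis using t by simp
  qed
  have sndEq: "c1 \<nu> t - round (Qd (par \<nu>) (c1 (par \<nu>)) (node (cen \<nu>) t) / \<eta>)
             = c2 \<nu> t - round (Qd (par \<nu>) (c2 (par \<nu>)) (node (cen \<nu>) t) / \<eta>)"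
    if nu: "\<nu> \<in> Idx" "\<nu> \<noteq> rt" and t: "t \<in> Tn" for \<nu> t
  proof -
    have "snd (enc c1) \<nu> t = snd (enc c2) \<nu> t" using eq by simp
    then show ?thesis using nu t unfolding enc_def by simp
  qed
  have undef: "c \<nu> t = undefined" if "c \<in> {c1, c2}" "\<nu> \<in> Idx" "t \<notin> Tn" for c \<nu> t
    using that f1 f2 code_undef2 by auto
  have claim: "\<forall>\<nu>\<in>Idx. sum \<nu> {1..d} = n \<longrightarrow> c1 \<nu> = c2 \<nu>" for n
  proof (induction n rule: less_induct)
    case (less n)
    show ?case
    proof (intro ballI impI)
      fix \<nu> assume nu: "\<nu> \<in> Idx" and sn: "sum \<nu> {1..d} = n"
      show "c1 \<nu> = c2 \<nu>"
      proof (cases "\<nu> = rt")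
        case True
        show ?thesis
        proof (rule ext)
          fix t show "c1 \<nu> t = c2 \<nu> t"
          proof (cases "t \<in> Tn")
            case True then show ?thesis using fstEq \<open>\<nu> = rt\<close> by simp
          next
            case False then show ?thesis using undef[of c1 \<nu> t] undef[of c2 \<nu> t] nu by simp
          qed
        qed
      next
        case False
        have pI: "par \<nu> \<in> Idx" by (rule par_Idx[OF nu False])
        have "sum (par \<nu>) {1..d} < n" using par_sum[OF nu False] sn by simp
        then have cp: "c1 (par \<nu>) = c2 (par \<nu>)" using less.IH pI by blast
        show ?thesis
        proof (rule ext)
          fix t show "c1 \<nu> t = c2 \<nu> t"
          proof (cases "t \<in> Tn")
            case True then show ?thesis using sndEq[OF nu False True] cp by simp
          next
            case False then show ?thesis using undef[of c1 \<nu> t] undef[of c2 \<nu> t] nu by simp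
          qed
        qed
      qed
    qed
  qed
  show "c1 = c2"
  proof (rule ext)
    fix \<nu> show "c1 \<nu> = c2 \<nu>"
    proof (cases "\<nu> \<in> Idx")
      case True then show ?thesis using claim by blast
    next
      case False then show ?thesis using f1 f2 code_undef1 by simp
    qed
  qed
qed

lemma card_Tn: "card Tn = (D + 1) ^ d"
  unfolding Tn_def by (simp add: card_PiE prod_constant)

lemma card_Idx: "card Idx = Nn ^ d"
  unfolding Idx_def by (simp add: card_PiE prod_constant)

lemma finite_Tgt: "finite Tgt"
  unfolding Tgt_def Tn_def Idx_def by (intro finite_cartesian_product finite_PiE) auto

lemma card_Tgt: "card Tgt = (2 * R0 + 1) ^ ((D + 1) ^ d) * (2 * R + 1) ^ ((D + 1) ^ d * Nn ^ d)"
proof -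
  have fT: "finite Tn" unfolding Tn_def by (intro finite_PiE) auto
  have fI: "finite Idx" unfolding Idx_def by (intro finite_PiE) auto
  have c1: "card {- int n..int n} = 2 * n + 1" for n by (simp add: nat_eq_iff)
  have "card Tgt = card (Tn \<rightarrow>\<^sub>E {- int R0..int R0}) * card (Idx \<rightarrow>\<^sub>E (Tn \<rightarrow>\<^sub>E {- int R..int R}))"
    unfolding Tgt_def by (rule card_cartesian_product)
  also have "card (Tn \<rightarrow>\<^sub>E {- int R0..int R0}) = (2 * R0 + 1) ^ ((D + 1) ^ d)"
    using fT by (simp only: card_PiE prod_constant card_Tn c1)
  also have "card (Idx \<rightarrow>\<^sub>E (Tn \<rightarrow>\<^sub>E {- int R..int R})) = ((2 * R + 1) ^ ((D + 1) ^ d)) ^ (Nn ^ d)"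
    using fT fI by (simp only: card_PiE prod_constant card_Tn card_Idx c1)
  finally show ?thesis by (simp add: power_mult)
qed

lemma cover_main:
  "\<exists>G. finite G \<and> card G \<le> (2 * R0 + 1) ^ ((D + 1) ^ d) * (2 * R + 1) ^ ((D + 1) ^ d * Nn ^ d) \<and>
     (\<forall>f\<in>F. \<exists>g\<in>G. \<forall>x. (\<forall>j\<in>{1..d}. \<bar>x j\<bar> \<le> \<alpha>) \<longrightarrow> \<bar>f x - g x\<bar> \<le> E + Lam D ^ d * \<eta>)"
proof (intro exI conjI)
  have sub: "enc ` (code ` F) \<subseteq> Tgt" using enc_in by blast
  have fc: "finite (code ` F)"
    using finite_imageD[OF finite_subset[OF sub finite_Tgt] enc_inj] .
  show "finite (gfun ` code ` F)" using fc by simp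
  have "card (gfun ` code ` F) \<le> card (code ` F)" using fc by (rule card_image_le)
  also have "\<dots> = card (enc ` code ` F)" using enc_inj by (simp add: card_image)
  also have "\<dots> \<le> card Tgt" by (rule card_mono[OF finite_Tgt sub])
  finally show "card (gfun ` code ` F) \<le> (2 * R0 + 1) ^ ((D + 1) ^ d) * (2 * R + 1) ^ ((D + 1) ^ d * Nn ^ d)"
    unfolding card_Tgt .
  show "\<forall>f\<in>F. \<exists>g\<in>gfun ` code ` F. \<forall>x. (\<forall>j\<in>{1..d}. \<bar>x j\<bar> \<le> \<alpha>) \<longrightarrow> \<bar>f x - g x\<bar> \<le> E + Lam D ^ d * \<eta>"
    using approx_g by blast
qed

end

context sigctx
begin

lemma net_approx:
  assumes adm: "admissible_weights d r L K A B C w" and B1: "B \<ge> 1" and rho: "\<rho> > 0" and A0: "A \<ge> 0"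
    and L1: "L \<ge> 1" and r1: "r \<ge> 1" and th: "A * B^(L-1) * \<rho> \<le> 1"
  shows "\<exists>P. sep_poly d (k^L) P \<and> (\<forall>x. (\<forall>j\<in>{1..d}. \<bar>x j - x0 j\<bar> \<le> \<rho>) \<longrightarrow>
           \<bar>nn_net \<sigma> d r L K w x - P x\<bar> \<le> C * (Ec M d r k L * (A * B^(L-1) * \<rho>) ^ k))"
proof -
  have U: "\<forall>kk\<in>{1..K}. \<exists>P. sep_poly d (k^L) P \<and> (\<forall>x. (\<forall>j\<in>{1..d}. \<bar>x j - x0 j\<bar> \<le> \<rho>) \<longrightarrow>
        \<bar>nn_unit \<sigma> d r w L kk 1 x - P x\<bar> \<le> Ec M d r k L * (A * B^(L-1) * \<rho>) ^ k)"
    using unit_approx[OF adm B1 rho A0, of L x0] L1 r1 th by auto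
  from bchoice[OF U] obtain Pj where Pj0: "\<forall>kk\<in>{1..K}. sep_poly d (k^L) (Pj kk) \<and> (\<forall>x. (\<forall>j\<in>{1..d}. \<bar>x j - x0 j\<bar> \<le> \<rho>) \<longrightarrow>
        \<bar>nn_unit \<sigma> d r w L kk 1 x - Pj kk x\<bar> \<le> Ec M d r k L * (A * B^(L-1) * \<rho>) ^ k)" by blast
  then have Pj: "\<And>kk. kk \<in> {1..K} \<Longrightarrow> sep_poly d (k^L) (Pj kk)"
    "\<And>kk x. kk \<in> {1..K} \<Longrightarrow> (\<forall>j\<in>{1..d}. \<bar>x j - x0 j\<bar> \<le> \<rho>) \<Longrightarrow>
        \<bar>nn_unit \<sigma> d r w L kk 1 x - Pj kk x\<bar> \<le> Ec M d r k L * (A * B^(L-1) * \<rho>) ^ k"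
    by blast+
  define P where "P x = (\<Sum>j=1..K. w L 1 1 j * Pj j x)" for x
  have sp: "sep_poly d (k^L) P" unfolding P_def
    by (intro sep_poly_sum sep_poly_cmult Pj(1)) auto
  have "\<bar>nn_net \<sigma> d r L K w x - P x\<bar> \<le> C * (Ec M d r k L * (A * B^(L-1) * \<rho>) ^ k)"
    if x: "\<forall>j\<in>{1..d}. \<bar>x j - x0 j\<bar> \<le> \<rho>" for x
  proof -
    have eq: "nn_net \<sigma> d r L K w x - P x = (\<Sum>j=1..K. w L 1 1 j * (nn_unit \<sigma> d r w L j 1 x - Pj j x))"
      unfolding nn_net_def P_def by (simp add: right_diff_distrib sum_subtractf)
    have "\<bar>\<Sum>j=1..K. w L 1 1 j * (nn_unit \<sigma> d r w L j 1 x - Pj j x)\<bar> \<le> (\<Sum>j=1..K. \<bar>w L 1 1 j * (nn_unit \<sigma> d r w L j 1 x - Pj j x)\<bar>)"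
      by (rule sum_abs)
    also have "\<dots> \<le> (\<Sum>j=1..K. \<bar>w L 1 1 j\<bar> * (Ec M d r k L * (A * B^(L-1) * \<rho>) ^ k))"
    proof (rule sum_mono)
      fix j assume j: "j \<in> {1..K}"
      show "\<bar>w L 1 1 j * (nn_unit \<sigma> d r w L j 1 x - Pj j x)\<bar> \<le> \<bar>w L 1 1 j\<bar> * (Ec M d r k L * (A * B^(L-1) * \<rho>) ^ k)"
        unfolding abs_mult by (rule mult_left_mono[OF Pj(2)[OF j x] abs_ge_zero])
    qed
    also have "\<dots> = (\<Sum>j=1..K. \<bar>w L 1 1 j\<bar>) * (Ec M d r k L * (A * B^(L-1) * \<rho>) ^ k)"
      by (rule sum_distrib_right[symmetric])
    also have "\<dots> \<le> C * (Ec M d r k L * (A * B^(L-1) * \<rho>) ^ k)"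
    proof (rule mult_right_mono)
      show "(\<Sum>j=1..K. \<bar>w L 1 1 j\<bar>) \<le> C" using adm unfolding admissible_weights_def by (rule conjunct1)
      have "0 \<le> A * B^(L-1) * \<rho>" using A0 B1 rho by simp
      then show "0 \<le> Ec M d r k L * (A * B^(L-1) * \<rho>) ^ k"
        using Ec_nonneg[of M d r k L] M1 by simp
    qed
    finally show ?thesis unfolding eq .
  qed
  then show ?thesis using sp by blast
qed

lemma unit_bound: "L \<ge> 1 \<Longrightarrow> \<bar>nn_unit \<sigma> d r w L kk i x\<bar> \<le> M"
proof -
  assume "L \<ge> 1"
  then obtain L' where L': "L = Suc L'" by (cases L) auto
  show ?thesis
  proof (cases L')
    case 0 then show ?thesis using L' sig_bound by simp
  next
    case (Suc l) then show ?thesis using L' sig_bound by simp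
  qed
qed

lemma net_bound:
  assumes adm: "admissible_weights d r L K A B C w" and L1: "L \<ge> 1"
  shows "\<bar>nn_net \<sigma> d r L K w x\<bar> \<le> C * M"
proof -
  have "\<bar>nn_net \<sigma> d r L K w x\<bar> \<le> (\<Sum>j=1..K. \<bar>w L 1 1 j\<bar> * M)"
    unfolding nn_net_def
  proof (rule order_trans[OF sum_abs], rule sum_mono)
    fix j assume j: "j \<in> {1..K}"
    show "\<bar>w L 1 1 j * nn_unit \<sigma> d r w L j 1 x\<bar> \<le> \<bar>w L 1 1 j\<bar> * M"
      unfolding abs_mult by (rule mult_left_mono[OF unit_bound[OF L1] abs_ge_zero])
  qed
  also have "\<dots> = (\<Sum>j=1..K. \<bar>w L 1 1 j\<bar>) * M" by (rule sum_distrib_right[symmetric])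
  also have "\<dots> \<le> C * M"
    using adm M1 unfolding admissible_weights_def by (intro mult_right_mono) auto
  finally show ?thesis .
qed

end

lemma cover_of_sup:
  assumes H: "finite H" and app: "\<forall>g\<in>G. \<exists>h\<in>H. \<forall>x. \<bar>g x - h x\<bar> \<le> \<delta>"
    and d0: "0 \<le> \<delta>" and de: "\<delta> < \<epsilon>" and n: "n \<ge> 1" and p: "p \<ge> 1"
  shows "(\<exists>N gs. is_Lp_cover p \<epsilon> G n xs N gs) \<and> covering_number p \<epsilon> G n xs \<le> card H"
proof -
  obtain hh where hh: "bij_betw hh {0..<card H} H" using ex_bij_betw_nat_finite[OF H] by blast
  have cov: "is_Lp_cover p \<epsilon> G n xs (card H) hh"
    unfolding is_Lp_cover_def
  proof
    fix g assume g: "g \<in> G"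
    obtain h where h: "h \<in> H" "\<forall>x. \<bar>g x - h x\<bar> \<le> \<delta>" using app g by blast
    obtain i where i: "i < card H" "hh i = h" using hh h(1) unfolding bij_betw_def by force
    have "(\<Sum>m=1..n. \<bar>g (xs m) - hh i (xs m)\<bar> powr p) \<le> (\<Sum>m=1..n. \<delta> powr p)"
      by (rule sum_mono) (use h(2) i(2) p in \<open>auto intro: powr_mono2\<close>)
    also have "\<dots> = real n * \<delta> powr p" by simp
    finally have "(1 / real n) * (\<Sum>m=1..n. \<bar>g (xs m) - hh i (xs m)\<bar> powr p) \<le> (1 / real n) * (real n * \<delta> powr p)"
      using n by (intro mult_left_mono) auto
    also have "\<dots> = \<delta> powr p" using n by simp
    finally have a: "(1 / real n) * (\<Sum>m=1..n. \<bar>g (xs m) - hh i (xs m)\<bar> powr p) \<le> \<delta> powr p" .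
    have "((1 / real n) * (\<Sum>m=1..n. \<bar>g (xs m) - hh i (xs m)\<bar> powr p)) powr (1 / p) \<le> (\<delta> powr p) powr (1 / p)"
      by (rule powr_mono2) (use a p n in \<open>auto intro!: sum_nonneg divide_nonneg_nonneg\<close>)
    also have "\<dots> = \<delta>" using p d0 by (simp add: powr_powr)
    finally show "\<exists>i<card H. ((1 / real n) * (\<Sum>m=1..n. \<bar>g (xs m) - hh i (xs m)\<bar> powr p)) powr (1 / p) < \<epsilon>"
      using i(1) de by force
  qed
  have "covering_number p \<epsilon> G n xs \<le> card H"
    unfolding covering_number_def by (rule Least_le) (use cov in blast)
  then show ?thesis using cov by blast
qed

lemma trunc_lip: "\<bar>trunc_beta \<beta> a - trunc_beta \<beta> b\<bar> \<le> \<bar>a - b\<bar>"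
  unfolding trunc_beta_def by (auto simp: max_def min_def abs_if)

lemma trunc_abs: "\<beta> \<ge> 0 \<Longrightarrow> \<bar>trunc_beta \<beta> a\<bar> \<le> \<bar>a\<bar>"
  unfolding trunc_beta_def by (auto simp: max_def min_def abs_if)

lemma ln_le_powr: fixes x s :: real assumes "x > 0" "s > 0" shows "ln x \<le> x powr s / s"
proof -
  have "x powr s > 0" using assms by simp
  then have "ln (x powr s) \<le> x powr s - 1" by (rule ln_le_minus_one)
  then have "s * ln x \<le> x powr s" using assms by (simp add: ln_powr)
  then show ?thesis using assms by (simp add: field_simps)
qed

lemma nat_ceiling_le: fixes z :: real assumes "z \<ge> 0" shows "real (nat \<lceil>z\<rceil>) \<le> z + 1"
proof -
  have "real (nat \<lceil>z\<rceil>) = real_of_int \<lceil>z\<rceil>" using assms by simp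
  also have "\<dots> \<le> z + 1" using ceiling_correct[of z] by linarith
  finally show ?thesis .
qed

lemma final_count:
  fixes N0 R0 Rs P1 Nn d k :: nat and c1 c3 Y Q :: real
  assumes N0: "N0 \<le> (2 * R0 + 1) ^ P1 * (2 * Rs + 1) ^ (P1 * Nn)"
    and Nn: "real Nn \<le> c1 * Y"
    and R0: "real (2 * R0 + 1) \<le> c3 * Q" and Q: "Q > 0" and QY: "Q powr (real d / real k) \<le> Y"
    and c3: "c3 \<ge> 1" and dk: "d \<ge> 1" "k \<ge> 1"
  shows "real N0 \<le> exp ((real P1 * (real k / real d + c1 * ln (real (2 * Rs + 1)))) * Y + (real P1 * ln c3 + 1))"
proof -
  define X where "X = real ((2 * R0 + 1) ^ P1 * (2 * Rs + 1) ^ (P1 * Nn))"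
  have X0: "X > 0" unfolding X_def by simp
  have lnX: "ln X = real P1 * ln (real (2 * R0 + 1)) + real (P1 * Nn) * ln (real (2 * Rs + 1))"
    unfolding X_def by (simp add: ln_mult ln_realpow)
  have l1: "ln (real (2 * R0 + 1)) \<le> ln c3 + real k / real d * Y"
  proof -
    have "ln (real (2 * R0 + 1)) \<le> ln (c3 * Q)" using R0 Q by simp
    also have "\<dots> = ln c3 + ln Q" using c3 Q by (simp add: ln_mult)
    also have "ln Q \<le> Q powr (real d / real k) / (real d / real k)"
      by (rule ln_le_powr) (use Q dk in auto)
    also have "\<dots> = real k / real d * Q powr (real d / real k)" by simp
    also have "\<dots> \<le> real k / real d * Y" using QY by (intro mult_left_mono) auto
    finally show ?thesis by simp
  qed
  have l2: "real (P1 * Nn) * ln (real (2 * Rs + 1)) \<le> real P1 * (c1 * Y) * ln (real (2 * Rs + 1))"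
    using Nn by (simp add: mult_left_mono mult_right_mono)
  have "ln X \<le> real P1 * (ln c3 + real k / real d * Y) + real P1 * (c1 * Y) * ln (real (2 * Rs + 1))"
    unfolding lnX using l1 l2 by (intro add_mono mult_left_mono) auto
  also have "\<dots> = (real P1 * (real k / real d + c1 * ln (real (2 * Rs + 1)))) * Y + real P1 * ln c3"
    by (simp add: algebra_simps)
  also have "\<dots> \<le> (real P1 * (real k / real d + c1 * ln (real (2 * Rs + 1)))) * Y + (real P1 * ln c3 + 1)"
    by simp
  finally have "X \<le> exp ((real P1 * (real k / real d + c1 * ln (real (2 * Rs + 1)))) * Y + (real P1 * ln c3 + 1))"
    using X0 by (metis exp_le_cancel_iff exp_ln)
  moreover have "real N0 \<le> X" unfolding X_def using N0 by (simp only: of_nat_le_iff)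
  ultimately show ?thesis by linarith
qed


theorem lemma4:
  fixes d r L k :: nat and \<sigma> :: "real \<Rightarrow> real" and p :: real
  assumes "d \<ge> 1" "r \<ge> 1" "L \<ge> 1" "k \<ge> 1"
    and "smooth_bounded_derivs k \<sigma>"
    and "1 \<le> p"
  shows "\<exists>c11 c12 c13 :: real. c11 > 0 \<and> c12 > 0 \<and> c13 > 0 \<and>
    (\<forall>(n::nat) (K::nat) (\<alpha>::real) (\<beta>::real) (A::real) (B::real) (C::real) (\<epsilon>::real)
       (xs :: nat \<Rightarrow> nat \<Rightarrow> real).
      n \<ge> 1 \<longrightarrow> K \<ge> 1 \<longrightarrow> \<alpha> \<ge> 1 \<longrightarrow> \<beta> > 0 \<longrightarrow> A \<ge> 1 \<longrightarrow> B \<ge> 1 \<longrightarrow> C \<ge> 1 \<longrightarrow>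
      0 < \<epsilon> \<longrightarrow> \<epsilon> < \<beta> \<longrightarrow>
      (let G = {(\<lambda>x. trunc_beta \<beta> (f x) * cube_ind \<alpha> d x) | f. f \<in> net_class \<sigma> d r L K A B C}
       in (\<exists>N gs. is_Lp_cover p \<epsilon> G n xs N gs) \<and>
          real (covering_number p \<epsilon> G n xs)
            \<le> (c11 * \<beta> powr p / \<epsilon> powr p) powr
                (c12 * \<alpha> ^ d * B ^ ((L - 1) * d) * A ^ d * (C / \<epsilon>) powr (real d / real k) + c13)))"
proof -
  note d1 = assms(1) and r1 = assms(2) and L1 = assms(3) and k1 = assms(4) and p1 = assms(6)
  obtain Dd where D0: "Dd 0 = \<sigma>" and Dder: "\<forall>j<k. \<forall>t. (Dd j has_real_derivative Dd (Suc j) t) (at t)"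
    and Dbd: "\<forall>j\<le>k. bounded (range (Dd j))"
    using assms(5) unfolding smooth_bounded_derivs_def by blast
  have "\<forall>j\<in>{..k}. \<exists>b. \<forall>t. \<bar>Dd j t\<bar> \<le> b"
  proof
    fix j assume "j \<in> {..k}"
    then obtain b where "\<forall>x\<in>range (Dd j). norm x \<le> b" using Dbd bounded_iff by blast
    then show "\<exists>b. \<forall>t. \<bar>Dd j t\<bar> \<le> b" by auto
  qed
  then obtain bb where bb: "\<forall>j\<in>{..k}. \<forall>t. \<bar>Dd j t\<bar> \<le> bb j" by (rule bchoice[THEN exE]) blast
  define M where "M = 1 + (\<Sum>j\<le>k. \<bar>bb j\<bar>)"
  have M1: "M \<ge> 1" unfolding M_def by (simp add: sum_nonneg)
  have Mb: "\<bar>Dd j t\<bar> \<le> M" if "j \<le> k" for j t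
  proof -
    have "\<bar>Dd j t\<bar> \<le> bb j" using bb that by auto
    also have "\<dots> \<le> \<bar>bb j\<bar>" by simp
    also have "\<dots> \<le> (\<Sum>j\<le>k. \<bar>bb j\<bar>)" by (rule member_le_sum) (use that in auto)
    finally show ?thesis unfolding M_def by simp
  qed
  interpret S: sigctx \<sigma> Dd k M
    by unfold_locales (use k1 M1 D0 Dder Mb in auto)
  define Dg where "Dg = k ^ L"
  have Dg1: "Dg \<ge> 1" unfolding Dg_def using k1 by simp
  define \<Lambda>d where "\<Lambda>d = Lam Dg ^ d"
  have Ld1: "\<Lambda>d \<ge> 1" unfolding \<Lambda>d_def using Lam_ge1[OF Dg1] by simp
  define EL where "EL = Ec M d r k L"
  have EL0: "EL \<ge> 0" unfolding EL_def using Ec_nonneg M1 by simp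
  define K1 where "K1 = max M EL"
  have K1M: "K1 \<ge> M" and K1E: "K1 \<ge> EL" and K11: "K1 \<ge> 1" unfolding K1_def using M1 by auto
  define Rs where "Rs = nat \<lceil>1 + \<Lambda>d + 2 * \<Lambda>d\<rceil>"
  define c1 where "c1 = 6 ^ d * (4 * K1) powr (real d / real k)"
  define c3 where "c3 = 8 * \<Lambda>d * M + (2 * \<Lambda>d + 5) * 4 * K1"
  define P1 where "P1 = (Dg + 1) ^ d"
  define a where "a = real P1 * (real k / real d + c1 * ln (real (2 * Rs + 1)))"
  define b where "b = real P1 * ln c3 + 1"
  have c3_1: "c3 \<ge> 1"
  proof -
    have "(2 * \<Lambda>d + 5) * (4 * K1) \<ge> 1 * 1" using Ld1 K11 by (intro mult_mono) auto
    moreover have "8 * \<Lambda>d * M \<ge> 0" using Ld1 M1 by simp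
    moreover have "c3 = 8 * \<Lambda>d * M + (2 * \<Lambda>d + 5) * (4 * K1)" unfolding c3_def by (simp add: mult.assoc)
    ultimately show ?thesis by linarith
  qed
  have c1_0: "c1 > 0" unfolding c1_def using K11 by simp
  have P1_1: "P1 \<ge> 1" unfolding P1_def by simp
  have a0: "a > 0" unfolding a_def using P1_1 c1_0 d1 k1
    by (intro mult_pos_pos add_pos_nonneg) auto
  have b0: "b > 0" unfolding b_def using P1_1 c3_1 by (simp add: add_nonneg_pos)
  show ?thesis
  proof (rule exI[of _ "exp 1"], rule exI[of _ a], rule exI[of _ b], intro conjI)
    show "exp 1 > (0::real)" by simp
    show "a > 0" by (rule a0)
    show "b > 0" by (rule b0)
  next
    show "\<forall>(n::nat) (K::nat) (\<alpha>::real) (\<beta>::real) (A::real) (B::real) (C::real) (\<epsilon>::real)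
       (xs :: nat \<Rightarrow> nat \<Rightarrow> real).
      n \<ge> 1 \<longrightarrow> K \<ge> 1 \<longrightarrow> \<alpha> \<ge> 1 \<longrightarrow> \<beta> > 0 \<longrightarrow> A \<ge> 1 \<longrightarrow> B \<ge> 1 \<longrightarrow> C \<ge> 1 \<longrightarrow>
      0 < \<epsilon> \<longrightarrow> \<epsilon> < \<beta> \<longrightarrow>
      (let G = {(\<lambda>x. trunc_beta \<beta> (f x) * cube_ind \<alpha> d x) | f. f \<in> net_class \<sigma> d r L K A B C}
       in (\<exists>N gs. is_Lp_cover p \<epsilon> G n xs N gs) \<and>
          real (covering_number p \<epsilon> G n xs)
            \<le> (exp 1 * \<beta> powr p / \<epsilon> powr p) powr
                (a * \<alpha> ^ d * B ^ ((L - 1) * d) * A ^ d * (C / \<epsilon>) powr (real d / real k) + b))"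
  proof (intro allI impI)
    fix n K :: nat and \<alpha> \<beta> A B C \<epsilon> :: real and xs :: "nat \<Rightarrow> nat \<Rightarrow> real"
    assume n1: "n \<ge> 1" and K1': "K \<ge> 1" and al1: "\<alpha> \<ge> 1" and be0: "\<beta> > 0" and A1: "A \<ge> 1"
      and B1: "B \<ge> 1" and C1: "C \<ge> 1" and ep0: "0 < \<epsilon>" and epb: "\<epsilon> < \<beta>"
    define G where "G = {(\<lambda>x. trunc_beta \<beta> (f x) * cube_ind \<alpha> d x) | f. f \<in> net_class \<sigma> d r L K A B C}"
    define Y where "Y = \<alpha> ^ d * B ^ ((L - 1) * d) * A ^ d * (C / \<epsilon>) powr (real d / real k)"
    have Y0: "Y \<ge> 0" unfolding Y_def using al1 A1 B1 by simp
    have QY: "(C / \<epsilon>) powr (real d / real k) \<le> Y"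
    proof -
      have h: "1 \<le> \<alpha> ^ d" "1 \<le> B ^ ((L - 1) * d)" "1 \<le> A ^ d" using al1 B1 A1 by (simp_all add: one_le_power)
      have "1 * 1 * 1 \<le> \<alpha> ^ d * B ^ ((L - 1) * d) * A ^ d"
        by (intro mult_mono) (use h in auto)
      then have "1 \<le> \<alpha> ^ d * B ^ ((L - 1) * d) * A ^ d" by simp
      then show ?thesis unfolding Y_def using mult_right_mono[of 1 _ "(C / \<epsilon>) powr (real d / real k)"] by simp
    qed
    have rhs: "exp (a * Y + b) \<le> (exp 1 * \<beta> powr p / \<epsilon> powr p) powr (a * Y + b)"
    proof -
      have e0: "0 \<le> a * Y + b" using a0 b0 Y0 by simp
      have "\<epsilon> powr p \<le> \<beta> powr p" using ep0 epb p1 by (intro powr_mono2) auto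
      then have "1 \<le> \<beta> powr p / \<epsilon> powr p" using ep0 by simp
      then have "exp 1 \<le> exp 1 * \<beta> powr p / \<epsilon> powr p"
        using mult_left_mono[of 1 "\<beta> powr p / \<epsilon> powr p" "exp 1"] by simp
      then have "exp 1 powr (a * Y + b) \<le> (exp 1 * \<beta> powr p / \<epsilon> powr p) powr (a * Y + b)"
        using e0 by (intro powr_mono2) auto
      moreover have "exp 1 powr (a * Y + b) = exp (a * Y + b)" by (simp add: powr_def)
      ultimately show ?thesis by simp
    qed
    have Gmem: "\<exists>w. admissible_weights d r L K A B C w \<and> g = (\<lambda>x. trunc_beta \<beta> (nn_net \<sigma> d r L K w x) * cube_ind \<alpha> d x)"
      if "g \<in> G" for g
      using that unfolding G_def net_class_def by blast
    have cube01: "\<bar>cube_ind \<alpha> d x\<bar> \<le> 1" for x unfolding cube_ind_def by simp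
    have aYb: "0 \<le> a * Y + b" using a0 b0 Y0 by simp
    have main: "(\<exists>N gs. is_Lp_cover p \<epsilon> G n xs N gs) \<and> real (covering_number p \<epsilon> G n xs) \<le> exp (a * Y + b)"
    proof (cases "4 * C * K1 \<le> \<epsilon>")
      case True
      have app: "\<forall>g\<in>G. \<exists>h\<in>{\<lambda>x. 0}. \<forall>x. \<bar>g x - h x\<bar> \<le> \<epsilon> / 4"
      proof
        fix g assume g: "g \<in> G"
        obtain w where w: "admissible_weights d r L K A B C w"
          "g = (\<lambda>x. trunc_beta \<beta> (nn_net \<sigma> d r L K w x) * cube_ind \<alpha> d x)" using Gmem[OF g] by blast
        have "\<bar>g x\<bar> \<le> \<epsilon> / 4" for x
        proof -
          have "\<bar>g x\<bar> = \<bar>trunc_beta \<beta> (nn_net \<sigma> d r L K w x)\<bar> * \<bar>cube_ind \<alpha> d x\<bar>"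
            unfolding w(2) by (simp add: abs_mult)
          also have "\<dots> \<le> \<bar>nn_net \<sigma> d r L K w x\<bar> * 1"
            by (intro mult_mono trunc_abs cube01) (use be0 in auto)
          also have "\<dots> \<le> C * M" using S.net_bound[OF w(1) L1] by simp
          also have "\<dots> \<le> C * K1" using K1M C1 by simp
          also have "\<dots> \<le> \<epsilon> / 4" using True by simp
          finally show ?thesis .
        qed
        then show "\<exists>h\<in>{\<lambda>x. 0}. \<forall>x. \<bar>g x - h x\<bar> \<le> \<epsilon> / 4" by simp
      qed
      have cv: "(\<exists>N gs. is_Lp_cover p \<epsilon> G n xs N gs) \<and> covering_number p \<epsilon> G n xs \<le> card {\<lambda>x::nat\<Rightarrow>real. 0::real}"
        by (rule cover_of_sup[OF _ app]) (use ep0 n1 p1 in auto)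
      have "real (covering_number p \<epsilon> G n xs) \<le> 1" using cv by simp
      also have "1 \<le> exp (a * Y + b)" using aYb by simp
      finally show ?thesis using cv by blast
    next
      case False
      then have epsC: "\<epsilon> < 4 * C * K1" by simp
      define q where "q = \<epsilon> / (4 * C * K1)"
      have q0: "q > 0" and q1: "q < 1" unfolding q_def using ep0 C1 K11 epsC by auto
      define s where "s = q powr (1 / real k)"
      have s0: "s > 0" unfolding s_def using q0 by simp
      have s1: "s \<le> 1"
      proof -
        have "q powr (1 / real k) \<le> 1 powr (1 / real k)" using q0 q1 by (intro powr_mono2) auto
        then show ?thesis unfolding s_def by simp
      qed
      have sk: "s ^ k = q"
      proof -
        have "s ^ k = q powr (real k * (1 / real k))" unfolding s_def using q0 by (simp add: powr_power)
        also have "\<dots> = q" using k1 q0 by simp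
        finally show ?thesis .
      qed
      define G0 where "G0 = A * B ^ (L - 1)"
      have G01: "G0 \<ge> 1" unfolding G0_def using A1 B1 one_le_power[of B "L - 1"]
        using mult_mono[of 1 A 1 "B ^ (L - 1)"] by simp
      define \<rho> where "\<rho> = s / (3 * G0)"
      have rho0: "\<rho> > 0" unfolding \<rho>_def using s0 G01 by simp
      have th3: "A * B ^ (L - 1) * (3 * \<rho>) = s" unfolding \<rho>_def G0_def[symmetric] using G01 by simp
      define \<eta> where "\<eta> = \<epsilon> / (4 * \<Lambda>d)"
      have eta0: "\<eta> > 0" unfolding \<eta>_def using ep0 Ld1 by simp
      interpret CV: covctx d Dg \<alpha> \<rho> \<eta> "\<epsilon> / 4" "C * M" "net_class \<sigma> d r L K A B C"
      proof unfold_locales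
        show "d \<ge> 1" "Dg \<ge> 1" "\<alpha> > 0" "\<rho> > 0" "\<eta> > 0" "\<epsilon> / 4 \<ge> 0"
          using d1 Dg1 al1 rho0 eta0 ep0 by auto
      next
        fix f c assume f: "f \<in> net_class \<sigma> d r L K A B C"
        obtain w where w: "admissible_weights d r L K A B C w" "f = nn_net \<sigma> d r L K w"
          using f unfolding net_class_def by blast
        have r3: "3 * \<rho> > 0" using rho0 by simp
        obtain P where P: "sep_poly d (k^L) P" "\<forall>x. (\<forall>j\<in>{1..d}. \<bar>x j - c j\<bar> \<le> 3 * \<rho>) \<longrightarrow>
           \<bar>nn_net \<sigma> d r L K w x - P x\<bar> \<le> C * (Ec M d r k L * (A * B^(L-1) * (3 * \<rho>)) ^ k)"
          using S.net_approx[OF w(1) B1 r3 _ L1 r1, of c] A1 th3 s1 by auto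
        have "C * (Ec M d r k L * (A * B^(L-1) * (3 * \<rho>)) ^ k) = C * (EL * q)"
          unfolding th3 sk EL_def ..
        also have "\<dots> \<le> C * (K1 * q)" using K1E q0 C1 by (intro mult_left_mono mult_right_mono) auto
        also have "\<dots> = \<epsilon> / 4" unfolding q_def using C1 K11 by (simp add: field_simps)
        finally have "C * (Ec M d r k L * (A * B^(L-1) * (3 * \<rho>)) ^ k) \<le> \<epsilon> / 4" .
        then show "\<exists>P. sep_poly d Dg P \<and> (\<forall>x. (\<forall>j\<in>{1..d}. \<bar>x j - c j\<bar> \<le> 3 * \<rho>) \<longrightarrow> \<bar>f x - P x\<bar> \<le> \<epsilon> / 4)"
          using P unfolding w(2) Dg_def by (meson order_trans)
      next
        fix f x assume f: "f \<in> net_class \<sigma> d r L K A B C"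
        obtain w where w: "admissible_weights d r L K A B C w" "f = nn_net \<sigma> d r L K w"
          using f unfolding net_class_def by blast
        show "\<bar>f x\<bar> \<le> C * M" unfolding w(2) by (rule S.net_bound[OF w(1) L1])
      qed
      obtain H0 where H0: "finite H0" "card H0 \<le> (2 * CV.R0 + 1) ^ ((Dg + 1) ^ d) * (2 * CV.R + 1) ^ ((Dg + 1) ^ d * CV.Nn ^ d)"
        "\<forall>f\<in>net_class \<sigma> d r L K A B C. \<exists>g\<in>H0. \<forall>x. (\<forall>j\<in>{1..d}. \<bar>x j\<bar> \<le> \<alpha>) \<longrightarrow> \<bar>f x - g x\<bar> \<le> \<epsilon> / 4 + Lam Dg ^ d * \<eta>"
        using CV.cover_main by blast
      have err: "\<epsilon> / 4 + Lam Dg ^ d * \<eta> = \<epsilon> / 2"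
        unfolding \<eta>_def \<Lambda>d_def[symmetric] using Ld1 by (simp add: field_simps)
      define H where "H = (\<lambda>h x. trunc_beta \<beta> (h x) * cube_ind \<alpha> d x) ` H0"
      have app: "\<forall>g\<in>G. \<exists>h\<in>H. \<forall>x. \<bar>g x - h x\<bar> \<le> \<epsilon> / 2"
      proof
        fix g assume g: "g \<in> G"
        obtain w where w: "admissible_weights d r L K A B C w"
          "g = (\<lambda>x. trunc_beta \<beta> (nn_net \<sigma> d r L K w x) * cube_ind \<alpha> d x)" using Gmem[OF g] by blast
        have fN: "nn_net \<sigma> d r L K w \<in> net_class \<sigma> d r L K A B C" unfolding net_class_def using w(1) by blast
        obtain h where h: "h \<in> H0" "\<forall>x. (\<forall>j\<in>{1..d}. \<bar>x j\<bar> \<le> \<alpha>) \<longrightarrow> \<bar>nn_net \<sigma> d r L K w x - h x\<bar> \<le> \<epsilon> / 2"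
          using H0(3) fN err by metis
        have "\<bar>g x - trunc_beta \<beta> (h x) * cube_ind \<alpha> d x\<bar> \<le> \<epsilon> / 2" for x
        proof (cases "\<forall>j\<in>{1..d}. \<bar>x j\<bar> \<le> \<alpha>")
          case True
          then have "\<bar>g x - trunc_beta \<beta> (h x) * cube_ind \<alpha> d x\<bar> = \<bar>trunc_beta \<beta> (nn_net \<sigma> d r L K w x) - trunc_beta \<beta> (h x)\<bar>"
            unfolding w(2) cube_ind_def by simp
          also have "\<dots> \<le> \<bar>nn_net \<sigma> d r L K w x - h x\<bar>" by (rule trunc_lip)
          also have "\<dots> \<le> \<epsilon> / 2" using h(2) True by blast
          finally show ?thesis .
        next
          case False
          then have "cube_ind \<alpha> d x = 0" unfolding cube_ind_def by auto
          then show ?thesis unfolding w(2) using ep0 by simp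
        qed
        then have A1: "\<forall>x. \<bar>g x - (\<lambda>x. trunc_beta \<beta> (h x) * cube_ind \<alpha> d x) x\<bar> \<le> \<epsilon> / 2" by simp
        have A2: "(\<lambda>x. trunc_beta \<beta> (h x) * cube_ind \<alpha> d x) \<in> H"
          unfolding H_def by (rule image_eqI[OF _ h(1)]) simp
        show "\<exists>h\<in>H. \<forall>x. \<bar>g x - h x\<bar> \<le> \<epsilon> / 2" by (rule bexI[where P="\<lambda>h. \<forall>x. \<bar>g x - h x\<bar> \<le> \<epsilon> / 2", OF A1 A2])
      qed
      have cv: "(\<exists>N gs. is_Lp_cover p \<epsilon> G n xs N gs) \<and> covering_number p \<epsilon> G n xs \<le> card H"
        by (rule cover_of_sup[OF _ app]) (use ep0 n1 p1 H0(1) in \<open>auto simp: H_def\<close>)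
      have cH: "card H \<le> card H0" unfolding H_def using H0(1) by (rule card_image_le)
      have Req: "CV.R = Rs"
      proof -
        have "2 * (\<epsilon> / 4) / \<eta> = 2 * \<Lambda>d" unfolding \<eta>_def using ep0 Ld1 by (simp add: field_simps)
        then show ?thesis unfolding CV.R_def Rs_def \<Lambda>d_def[symmetric] by simp
      qed
      have N0: "card H0 \<le> (2 * CV.R0 + 1) ^ P1 * (2 * Rs + 1) ^ (P1 * CV.Nn ^ d)"
        using H0(2) unfolding Req P1_def .
      have Q0: "C / \<epsilon> > 0" using C1 ep0 by simp
      have oneQ: "1 \<le> 4 * K1 * (C / \<epsilon>)" using epsC ep0 by (simp add: field_simps)
      have R0b: "real (2 * CV.R0 + 1) \<le> c3 * (C / \<epsilon>)"
      proof -
        define z where "z = (C * M + \<epsilon> / 4) / \<eta> + 1"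
        have z0: "z \<ge> 0" unfolding z_def using C1 M1 ep0 eta0 by simp
        have Rz: "real CV.R0 \<le> z + 1" unfolding CV.R0_def z_def[symmetric] by (rule nat_ceiling_le[OF z0])
        have zeq: "z = 4 * \<Lambda>d * M * (C / \<epsilon>) + \<Lambda>d + 1"
          unfolding z_def \<eta>_def using ep0 Ld1 by (simp add: field_simps)
        have "real (2 * CV.R0 + 1) \<le> 8 * \<Lambda>d * M * (C / \<epsilon>) + (2 * \<Lambda>d + 5)"
          using Rz zeq by simp
        also have "(2 * \<Lambda>d + 5) \<le> (2 * \<Lambda>d + 5) * (4 * K1 * (C / \<epsilon>))"
          using oneQ Ld1 mult_left_mono[of 1 "4 * K1 * (C / \<epsilon>)" "2 * \<Lambda>d + 5"] by simp
        also have "8 * \<Lambda>d * M * (C / \<epsilon>) + (2 * \<Lambda>d + 5) * (4 * K1 * (C / \<epsilon>)) = c3 * (C / \<epsilon>)"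
          unfolding c3_def by (simp add: algebra_simps add_divide_distrib)
        finally show ?thesis by simp
      qed
      have Nnb: "real (CV.Nn ^ d) \<le> c1 * Y"
      proof -
        have ar: "\<alpha> / \<rho> \<ge> 1"
        proof -
          have "s \<le> 1 * G0" using s1 G01 by simp
          then have "\<rho> \<le> 1 / 3" unfolding \<rho>_def using G01 by (simp add: field_simps)
          then have "\<rho> \<le> \<alpha>" using al1 by simp
          then show ?thesis using rho0 by simp
        qed
        have Nn1: "real CV.Nn \<le> 2 * (\<alpha> / \<rho>)"
        proof -
          have "real CV.Nn \<le> \<alpha> / \<rho> + 1" unfolding CV.Nn_def by (rule nat_ceiling_le) (use ar in simp)
          then show ?thesis using ar by simp
        qed
        have "real (CV.Nn ^ d) = real CV.Nn ^ d" by simp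
        also have "\<dots> \<le> (2 * (\<alpha> / \<rho>)) ^ d" by (rule power_mono[OF Nn1]) simp
        also have "2 * (\<alpha> / \<rho>) = 6 * \<alpha> * G0 * (1 / s)" unfolding \<rho>_def using s0 G01 by (simp add: field_simps)
        also have "(6 * \<alpha> * G0 * (1 / s)) ^ d = (6 * \<alpha> * G0) ^ d * (1 / s) ^ d" by (rule power_mult_distrib)
        also have "(1 / s) ^ d = (4 * K1) powr (real d / real k) * (C / \<epsilon>) powr (real d / real k)"
        proof -
          have "1 / s = (1 / q) powr (1 / real k)" unfolding s_def by (simp add: powr_divide)
          then have "(1 / s) ^ d = (1 / q) powr (real d * (1 / real k))" using q0 by (simp add: powr_power)
          also have "1 / q = 4 * K1 * (C / \<epsilon>)" unfolding q_def using ep0 C1 K11 by (simp add: field_simps)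
          finally have X: "(1 / s) ^ d = (4 * K1 * (C / \<epsilon>)) powr (real d / real k)" by simp
          show ?thesis unfolding X by (rule powr_mult)
        qed
        also have "(6 * \<alpha> * G0) ^ d = 6 ^ d * (\<alpha> ^ d * B ^ ((L - 1) * d) * A ^ d)"
        proof -
          have "(6 * \<alpha> * G0) ^ d = 6 ^ d * \<alpha> ^ d * A ^ d * (B ^ (L - 1)) ^ d"
            unfolding G0_def by (simp only: power_mult_distrib mult.assoc)
          also have "(B ^ (L - 1)) ^ d = B ^ ((L - 1) * d)" by (rule power_mult[symmetric])
          finally show ?thesis by (simp add: mult_ac)
        qed
        also have "6 ^ d * (\<alpha> ^ d * B ^ ((L - 1) * d) * A ^ d) * ((4 * K1) powr (real d / real k) * (C / \<epsilon>) powr (real d / real k)) = c1 * Y"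
          unfolding c1_def Y_def by (simp add: algebra_simps)
        finally show ?thesis .
      qed
      have "real (card H0) \<le> exp (a * Y + b)"
        unfolding a_def b_def
        by (rule final_count[OF N0 Nnb R0b Q0 QY c3_1 d1 k1])
      then show ?thesis using cv cH by (meson le_trans of_nat_le_iff order_trans)
    qed
    show "let G = {(\<lambda>x. trunc_beta \<beta> (f x) * cube_ind \<alpha> d x) | f. f \<in> net_class \<sigma> d r L K A B C}
       in (\<exists>N gs. is_Lp_cover p \<epsilon> G n xs N gs) \<and>
          real (covering_number p \<epsilon> G n xs)
            \<le> (exp 1 * \<beta> powr p / \<epsilon> powr p) powr
                (a * \<alpha> ^ d * B ^ ((L - 1) * d) * A ^ d * (C / \<epsilon>) powr (real d / real k) + b)"
      unfolding Let_def G_def[symmetric] using main rhs unfolding Y_def by (simp add: mult.assoc)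
  qed
  qed
qed

end
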